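(* Let $(M,g,\varphi,\eta,\zeta)$ be an almost contact metric manifold of dimension $2n+1$ with $U(n)\times1$ intrinsic torsion $\xi$. Then $$s^{\rm alt}_{\mathfrak u(n)^\perp}=\tfrac12(i_8-i_{10}+i_{12}+i_{14})+2(i_7-i_{17}),\qquad s_{\mathfrak u(n)^\perp}=\tfrac12(s-s^* )+\mathrm{Ric}(\zeta,\zeta).$$
   Context: $(M,g)$ is an oriented Riemannian manifold of dimension $2n+1$ with Levi-Civita connection $\nabla$, a unit vector field $\zeta$, its dual one-form $\eta=g(\cdot,\zeta)$, and an endomorphism $\varphi$ with $\varphi^2X=-X+\eta(X)\zeta$ and $g(\varphi X,\varphi Y)=g(X,Y)-\eta(X)\eta(Y)$. This is a $U(n)\times1$-structure; $\mathfrak{so}(TM)=\mathfrak u(n)\oplus\mathfrak u(n)^\perp$ (orthogonal for the Killing form), and the projection onto $\mathfrak u(n)^\perp$ is $A\mapsto\frac12\big(A+\varphi A\varphi+\eta(A\,\cdot)\zeta+\eta(\cdot)A\zeta\big)$. The intrinsic torsion is $\xi_XY=\nabla^{U(n)}_XY-\nabla_XY$ where $\nabla^{U(n)}$ is induced by the $\mathfrak u(n)$-component of the Levi-Civita connection form; explicitly $\xi_XY=\frac12(\nabla_X\varphi)\varphi Y+\frac12(\nabla_X\eta)(Y)\zeta-\eta(Y)\nabla_X\zeta$. Conventions: $R(X,Y)=[\nabla_X,\nabla_Y]-\nabla_{[X,Y]}$; $(e_1,\dots,e_{2n})$ a local orthonormal frame of $\ker\eta$, completed by $\zeta$ to a frame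 $(E_a)$ of $TM$; $s=\sum_{a,b}g(R(E_a,E_b)E_b,E_a)$; $s^*=\sum_{a,b}g(R(E_a,E_b)\varphi E_b,\varphi E_a)$; $\mathrm{Ric}(X,Y)=\sum_ag(R(X,E_a)E_a,Y)$; $s_{\mathfrak u(n)^\perp}=\sum_{a,b}g(R(E_a,E_b)_{\mathfrak u(n)^\perp}E_b,E_a)$; $s^{\rm alt}_{\mathfrak u(n)^\perp}=\sum_{a,b}g([\xi_{E_a},\xi_{E_b}]_{\mathfrak u(n)^\perp}E_b,E_a)$. With $\alpha(X,Y,Z)=g(\xi_XY,Z)$ and indices $i,j,k$ running over $1,\dots,2n$: $i_7=\sum_{j,k}\alpha(\zeta,e_j,e_k)\alpha(e_j,\zeta,e_k)$, $i_8=\sum_{i,j}\alpha(e_i,e_j,\zeta)\alpha(e_j,e_i,\zeta)$, $i_{10}=\sum_{i,j}\alpha(e_i,e_i,\zeta)\alpha(e_j,e_j,\zeta)$, $i_{12}=\sum_{i,j}\alpha(e_i,e_j,\zeta)\alpha(\varphi e_j,\varphi e_i,\zeta)$, $i_{14}=\sum_{i,j}\alpha(e_i,\varphi e_i,\zeta)\alpha(e_j,\varphi e_j,\zeta)$, $i_{17}=\sum_{i,k}\alpha(e_i,e_i,e_k)\alpha(\zeta,\zeta,e_k)$. *)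

theory Defs
  imports "HOL-Analysis.Analysis"
begin

text \<open>Local-coordinate model of an almost contact metric manifold.
  The metric is a matrix field G, the structure tensor phi a matrix field Phi,
  the Reeb field zeta a vector field Z.\<close>

fun Ck_on :: "nat \<Rightarrow> 'a::real_normed_vector set \<Rightarrow> ('a \<Rightarrow> 'b::real_normed_vector) \<Rightarrow> bool" where
  "Ck_on 0 S f = continuous_on S f"
| "Ck_on (Suc k) S f = (f differentiable_on S \<and>
      (\<forall>v. Ck_on k S (\<lambda>x. frechet_derivative f (at x) v)))"

definition smooth_on :: "'a::real_normed_vector set \<Rightarrow> ('a \<Rightarrow> 'b::real_normed_vector) \<Rightarrow> bool" where
  "smooth_on S f = (\<forall>k. Ck_on k S f)"

definition gp :: "(real^'m \<Rightarrow> real^'m^'m) \<Rightarrow> real^'m \<Rightarrow> real^'m \<Rightarrow> real^'m \<Rightarrow> real" where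
  "gp G p x y = x \<bullet> (G p *v y)"

definition riem_metric_on :: "(real^'m) set \<Rightarrow> (real^'m \<Rightarrow> real^'m^'m) \<Rightarrow> bool" where
  "riem_metric_on U G = (smooth_on U G \<and>
     (\<forall>p\<in>U. transpose (G p) = G p \<and> (\<forall>x. x \<noteq> 0 \<longrightarrow> gp G p x x > 0)))"

text \<open>Christoffel symbols: Gam p x y is the coordinate expression of nabla_x y for
  constant coordinate fields, determined by the Koszul formula.\<close>
definition Gam :: "(real^'m \<Rightarrow> real^'m^'m) \<Rightarrow> real^'m \<Rightarrow> real^'m \<Rightarrow> real^'m \<Rightarrow> real^'m" where
  "Gam G p x y = matrix_inv (G p) *v (\<chi> l.
      (1/2) * ( y \<bullet> (frechet_derivative G (at p) x *v axis l 1)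
              + x \<bullet> (frechet_derivative G (at p) y *v axis l 1)
              - x \<bullet> (frechet_derivative G (at p) (axis l 1) *v y)))"

definition covV :: "(real^'m \<Rightarrow> real^'m^'m) \<Rightarrow> real^'m \<Rightarrow> real^'m \<Rightarrow> (real^'m \<Rightarrow> real^'m) \<Rightarrow> real^'m" where
  "covV G p x Y = frechet_derivative Y (at p) x + Gam G p x (Y p)"

text \<open>Riemann curvature R(x,y)z = nabla_x nabla_y z - nabla_y nabla_x z - nabla_[x,y] z
  (evaluated on constant coordinate extensions, whose bracket vanishes).\<close>
definition Rm :: "(real^'m \<Rightarrow> real^'m^'m) \<Rightarrow> real^'m \<Rightarrow> real^'m \<Rightarrow> real^'m \<Rightarrow> real^'m \<Rightarrow> real^'m" where
  "Rm G p x y z =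
     frechet_derivative (\<lambda>q. Gam G q y z) (at p) x
   - frechet_derivative (\<lambda>q. Gam G q x z) (at p) y
   + Gam G p x (Gam G p y z) - Gam G p y (Gam G p x z)"

definition etaf :: "(real^'m \<Rightarrow> real^'m^'m) \<Rightarrow> (real^'m \<Rightarrow> real^'m) \<Rightarrow> real^'m \<Rightarrow> real^'m \<Rightarrow> real" where
  "etaf G Z p y = gp G p y (Z p)"

definition almost_contact_metric_on ::
  "(real^'m) set \<Rightarrow> (real^'m \<Rightarrow> real^'m^'m) \<Rightarrow> (real^'m \<Rightarrow> real^'m^'m) \<Rightarrow> (real^'m \<Rightarrow> real^'m) \<Rightarrow> bool" where
  "almost_contact_metric_on U G Phi Z = (open U \<and> riem_metric_on U G \<and> smooth_on U Phi \<and> smooth_on U Z \<and>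
     (\<forall>p\<in>U. gp G p (Z p) (Z p) = 1 \<and>
        (\<forall>x. Phi p *v (Phi p *v x) = - x + etaf G Z p x *\<^sub>R Z p) \<and>
        (\<forall>x y. gp G p (Phi p *v x) (Phi p *v y) = gp G p x y - etaf G Z p x * etaf G Z p y)))"

definition covPhi :: "(real^'m \<Rightarrow> real^'m^'m) \<Rightarrow> (real^'m \<Rightarrow> real^'m^'m) \<Rightarrow> real^'m \<Rightarrow> real^'m \<Rightarrow> real^'m \<Rightarrow> real^'m" where
  "covPhi G Phi p x y = frechet_derivative Phi (at p) x *v y
       + Gam G p x (Phi p *v y) - Phi p *v Gam G p x y"

text \<open>(nabla_x eta)(y) = x(eta(Y)) - eta(nabla_x Y) with Y the constant extension of y\<close>
definition covEta :: "(real^'m \<Rightarrow> real^'m^'m) \<Rightarrow> (real^'m \<Rightarrow> real^'m) \<Rightarrow> real^'m \<Rightarrow> real^'m \<Rightarrow> real^'m \<Rightarrow> real" where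
  "covEta G Z p x y = frechet_derivative (\<lambda>q. etaf G Z q y) (at p) x - etaf G Z p (Gam G p x y)"

definition xi :: "(real^'m \<Rightarrow> real^'m^'m) \<Rightarrow> (real^'m \<Rightarrow> real^'m^'m) \<Rightarrow> (real^'m \<Rightarrow> real^'m) \<Rightarrow> real^'m \<Rightarrow> real^'m \<Rightarrow> real^'m \<Rightarrow> real^'m" where
  "xi G Phi Z p x y = (1/2) *\<^sub>R covPhi G Phi p x (Phi p *v y)
       + ((1/2) * covEta G Z p x y) *\<^sub>R Z p
       - etaf G Z p y *\<^sub>R covV G p x Z"

definition alpha where
  "alpha G Phi Z p x y z = gp G p (xi G Phi Z p x y) z"

text \<open>Projection of an endomorphism of the tangent space onto u(n)-perp.\<close>
definition perp :: "(real^'m \<Rightarrow> real^'m^'m) \<Rightarrow> (real^'m \<Rightarrow> real^'m^'m) \<Rightarrow> (real^'m \<Rightarrow> real^'m) \<Rightarrow> real^'m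
      \<Rightarrow> (real^'m \<Rightarrow> real^'m) \<Rightarrow> real^'m \<Rightarrow> real^'m" where
  "perp G Phi Z p A v = (1/2) *\<^sub>R (A v + Phi p *v A (Phi p *v v)
       + etaf G Z p (A v) *\<^sub>R Z p + etaf G Z p v *\<^sub>R A (Z p))"

definition commut :: "('a \<Rightarrow> 'a::ab_group_add) \<Rightarrow> ('a \<Rightarrow> 'a) \<Rightarrow> 'a \<Rightarrow> 'a" where
  "commut A B v = A (B v) - B (A v)"

definition adapted_frame where
  "adapted_frame G Z p n (e :: nat \<Rightarrow> real^'m) =
     ((\<forall>i<2*n. \<forall>j<2*n. gp G p (e i) (e j) = (if i = j then 1 else 0)) \<and>
     (\<forall>i<2*n. etaf G Z p (e i) = 0))"

definition Efr :: "nat \<Rightarrow> (nat \<Rightarrow> real^'m) \<Rightarrow> real^'m \<Rightarrow> nat \<Rightarrow> real^'m" where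
  "Efr n e z a = (if a < 2*n then e a else z)"

definition scal where
  "scal G Z n e p = (\<Sum>a<2*n+1. \<Sum>b<2*n+1.
      gp G p (Rm G p (Efr n e (Z p) a) (Efr n e (Z p) b) (Efr n e (Z p) b)) (Efr n e (Z p) a))"

definition scal_star where
  "scal_star G Phi Z n e p = (\<Sum>a<2*n+1. \<Sum>b<2*n+1.
      gp G p (Rm G p (Efr n e (Z p) a) (Efr n e (Z p) b) (Phi p *v Efr n e (Z p) b))
             (Phi p *v Efr n e (Z p) a))"

definition Ric where
  "Ric G Z n e p x y = (\<Sum>a<2*n+1. gp G p (Rm G p x (Efr n e (Z p) a) (Efr n e (Z p) a)) y)"

definition scal_perp where
  "scal_perp G Phi Z n e p = (\<Sum>a<2*n+1. \<Sum>b<2*n+1.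
      gp G p (perp G Phi Z p (Rm G p (Efr n e (Z p) a) (Efr n e (Z p) b)) (Efr n e (Z p) b))
             (Efr n e (Z p) a))"

definition scal_alt_perp where
  "scal_alt_perp G Phi Z n e p = (\<Sum>a<2*n+1. \<Sum>b<2*n+1.
      gp G p (perp G Phi Z p (commut (xi G Phi Z p (Efr n e (Z p) a)) (xi G Phi Z p (Efr n e (Z p) b)))
                 (Efr n e (Z p) b))
             (Efr n e (Z p) a))"

definition i7 where
  "i7 G Phi Z n e p = (\<Sum>j<2*n. \<Sum>k<2*n.
      alpha G Phi Z p (Z p) (e j) (e k) * alpha G Phi Z p (e j) (Z p) (e k))"

definition i8 where
  "i8 G Phi Z n e p = (\<Sum>i<2*n. \<Sum>j<2*n.
      alpha G Phi Z p (e i) (e j) (Z p) * alpha G Phi Z p (e j) (e i) (Z p))"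

definition i10 where
  "i10 G Phi Z n e p = (\<Sum>i<2*n. \<Sum>j<2*n.
      alpha G Phi Z p (e i) (e i) (Z p) * alpha G Phi Z p (e j) (e j) (Z p))"

definition i12 where
  "i12 G Phi Z n e p = (\<Sum>i<2*n. \<Sum>j<2*n.
      alpha G Phi Z p (e i) (e j) (Z p) * alpha G Phi Z p (Phi p *v e j) (Phi p *v e i) (Z p))"

definition i14 where
  "i14 G Phi Z n e p = (\<Sum>i<2*n. \<Sum>j<2*n.
      alpha G Phi Z p (e i) (Phi p *v e i) (Z p) * alpha G Phi Z p (e j) (Phi p *v e j) (Z p))"

definition i17 where
  "i17 G Phi Z n e p = (\<Sum>i<2*n. \<Sum>k<2*n.
      alpha G Phi Z p (e i) (e i) (e k) * alpha G Phi Z p (Z p) (Z p) (e k))"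

end

theory Submission
  imports Defs
begin

lemma mvt_bound_const:
  fixes f :: "real \<Rightarrow> 'b::real_normed_vector"
  assumes h: "0 \<le> h"
    and der: "\<And>t. t \<in> {0..h} \<Longrightarrow> (f has_vector_derivative f' t) (at t within {0..h})"
    and B: "\<And>t. t \<in> {0..h} \<Longrightarrow> norm (f' t - w) \<le> B"
  shows "norm (f h - f 0 - h *\<^sub>R w) \<le> B * h"
proof -
  define F where "F t = f t - t *\<^sub>R w" for t
  have dF: "(F has_derivative (\<lambda>s. s *\<^sub>R (f' t - w))) (at t within {0..h})" if "t \<in> {0..h}" for t
  proof -
    have "(f has_derivative (\<lambda>s. s *\<^sub>R f' t)) (at t within {0..h})"
      using der[OF that] by (simp add: has_vector_derivative_def)
    moreover have "((\<lambda>t. t *\<^sub>R w) has_derivative (\<lambda>s. s *\<^sub>R w)) (at t within {0..h})"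
      by (intro derivative_eq_intros) auto
    ultimately have "((\<lambda>t. f t - t *\<^sub>R w) has_derivative (\<lambda>s. s *\<^sub>R f' t - s *\<^sub>R w)) (at t within {0..h})"
      by (rule has_derivative_diff)
    then show ?thesis unfolding F_def by (simp add: scaleR_diff_right)
  qed
  have on: "onorm (\<lambda>s::real. s *\<^sub>R (f' t - w)) \<le> B" if "t \<in> {0..h}" for t
  proof -
    have "onorm (\<lambda>s::real. s *\<^sub>R (f' t - w)) = onorm (\<lambda>s::real. s) * norm (f' t - w)"
      by (rule onorm_scaleR_left) (rule bounded_linear_ident)
    also have "\<dots> \<le> 1 * norm (f' t - w)"
      by (intro mult_right_mono onorm_id_le) auto
    also have "\<dots> \<le> B" using B[OF that] by simp
    finally show ?thesis .
  qed
  have "norm (F h - F 0) \<le> B * norm (h - 0)"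
    by (rule differentiable_bound[of "{0..h}" F "\<lambda>t s. s *\<^sub>R (f' t - w)" B h 0])
       (use dF on h in auto)
  then show ?thesis using h by (simp add: F_def algebra_simps)
qed

lemma second_deriv_estimate:
  fixes f :: "'a::real_normed_vector \<Rightarrow> 'b::real_normed_vector"
  assumes S: "open S" "p \<in> S"
    and df: "\<And>q. q \<in> S \<Longrightarrow> f differentiable (at q)"
    and dd: "(\<lambda>q. frechet_derivative f (at q) x) differentiable (at p)"
    and e: "e > 0"
  shows "\<exists>h0>0. \<forall>h. 0 < h \<and> h < h0 \<longrightarrow>
     norm (f (p + h *\<^sub>R x + h *\<^sub>R y) - f (p + h *\<^sub>R x) - f (p + h *\<^sub>R y) + f p
           - (h * h) *\<^sub>R frechet_derivative (\<lambda>q. frechet_derivative f (at q) x) (at p) y) \<le> e * (h * h)"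
proof -
  define H where "H q = frechet_derivative f (at q) x" for q
  define L where "L = frechet_derivative H (at p)"
  have HL: "(H has_derivative L) (at p)"
    using dd unfolding H_def L_def by (simp add: frechet_derivative_works)
  have blL: "bounded_linear L" using HL has_derivative_bounded_linear by blast
  define C where "C = 2 * norm x + norm y + 1"
  have C: "C > 0" unfolding C_def by (simp add: add_nonneg_pos)
  obtain d where d: "d > 0" "\<And>u. norm (u - p) < d \<Longrightarrow> norm (H u - H p - L (u - p)) \<le> (e / C) * norm (u - p)"
    using HL e C unfolding has_derivative_at_alt by (metis divide_pos_pos)
  obtain r where r: "r > 0" "ball p r \<subseteq> S" using S open_contains_ball by blast
  define h0 where "h0 = min d r / C"
  have h0: "h0 > 0" unfolding h0_def using d r C by simp
  show ?thesis
  proof (intro exI conjI allI impI)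
    show "h0 > 0" by (rule h0)
    fix h :: real assume hh: "0 < h \<and> h < h0"
    have hC: "h * C < min d r" using hh C unfolding h0_def by (simp add: pos_less_divide_eq)
    have nx: "norm (t *\<^sub>R x) \<le> h * norm x" if "t \<in> {0..h}" for t
      using that by (simp add: mult_right_mono)
    have nxy: "norm (t *\<^sub>R x + h *\<^sub>R y) \<le> h * (norm x + norm y)" if "t \<in> {0..h}" for t
    proof -
      have "norm (t *\<^sub>R x + h *\<^sub>R y) \<le> norm (t *\<^sub>R x) + norm (h *\<^sub>R y)" by (rule norm_triangle_ineq)
      also have "\<dots> \<le> h * norm x + h * norm y" using nx[OF that] hh by simp
      finally show ?thesis by (simp add: algebra_simps)
    qed
    have "h * (norm x + norm y) \<le> h * C" using hh by (intro mult_left_mono) (auto simp: C_def)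
    then have hxy_lt: "h * (norm x + norm y) < min d r" using hC by linarith
    have "h * norm x \<le> h * C" using hh by (intro mult_left_mono) (auto simp: C_def)
    then have hx_lt: "h * norm x < min d r" using hC by linarith
    define psi where "psi t = f (p + t *\<^sub>R x + h *\<^sub>R y) - f (p + t *\<^sub>R x)" for t
    define psi' where "psi' t = H (p + t *\<^sub>R x + h *\<^sub>R y) - H (p + t *\<^sub>R x)" for t
    have inS1: "p + t *\<^sub>R x + h *\<^sub>R y \<in> S" if "t \<in> {0..h}" for t
    proof -
      have "norm (t *\<^sub>R x + h *\<^sub>R y) < r" using nxy[OF that] hxy_lt by simp
      moreover have "dist p (p + (t *\<^sub>R x + h *\<^sub>R y)) = norm (t *\<^sub>R x + h *\<^sub>R y)"
        by (metis dist_commute dist_norm add_diff_cancel_left')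
      ultimately have "p + (t *\<^sub>R x + h *\<^sub>R y) \<in> ball p r" by simp
      then show ?thesis using r by (auto simp: add.assoc)
    qed
    have inS2: "p + t *\<^sub>R x \<in> S" if "t \<in> {0..h}" for t
    proof -
      have "norm (t *\<^sub>R x) < r" using nx[OF that] hx_lt by simp
      then have "p + t *\<^sub>R x \<in> ball p r" by (simp add: dist_norm)
      then show ?thesis using r by auto
    qed
    have fder: "((\<lambda>t. f (q + t *\<^sub>R x)) has_vector_derivative H (q + t *\<^sub>R x)) (at t within {0..h})"
      if "q + t *\<^sub>R x \<in> S" for q t
    proof -
      have D1: "(f has_derivative frechet_derivative f (at (q + t *\<^sub>R x))) (at (q + t *\<^sub>R x))"
        using df[OF that] by (simp add: frechet_derivative_works)
      have D2: "((\<lambda>t. q + t *\<^sub>R x) has_derivative (\<lambda>s. s *\<^sub>R x)) (at t within {0..h})"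
        by (intro derivative_eq_intros) auto
      have D3: "((\<lambda>t. f (q + t *\<^sub>R x)) has_derivative
           (\<lambda>s. frechet_derivative f (at (q + t *\<^sub>R x)) (s *\<^sub>R x))) (at t within {0..h})"
        using has_derivative_compose[OF D2 D1] by simp
      have D4: "linear (frechet_derivative f (at (q + t *\<^sub>R x)))"
        using df[OF that] by (rule linear_frechet_derivative)
      show ?thesis using D3 D4
        unfolding has_vector_derivative_def H_def by (simp add: linear_scale)
    qed
    have psider: "(psi has_vector_derivative psi' t) (at t within {0..h})" if "t \<in> {0..h}" for t
    proof -
      have a: "((\<lambda>t. f ((p + h *\<^sub>R y) + t *\<^sub>R x)) has_vector_derivative H ((p + h *\<^sub>R y) + t *\<^sub>R x)) (at t within {0..h})"
        by (rule fder) (use inS1[OF that] in \<open>simp add: algebra_simps\<close>)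
      have b: "((\<lambda>t. f (p + t *\<^sub>R x)) has_vector_derivative H (p + t *\<^sub>R x)) (at t within {0..h})"
        by (rule fder) (rule inS2[OF that])
      show ?thesis using has_vector_derivative_diff[OF a b]
        unfolding psi_def psi'_def by (simp add: algebra_simps)
    qed
    have bnd: "norm (psi' t - h *\<^sub>R L y) \<le> e * h" if "t \<in> {0..h}" for t
    proof -
      let ?u1 = "t *\<^sub>R x + h *\<^sub>R y" and ?u2 = "t *\<^sub>R x"
      have e1: "norm (H (p + ?u1) - H p - L ?u1) \<le> (e / C) * norm ?u1"
        using d(2)[of "p + ?u1"] nxy[OF that] hxy_lt by simp
      have e2: "norm (H (p + ?u2) - H p - L ?u2) \<le> (e / C) * norm ?u2"
        using d(2)[of "p + ?u2"] nx[OF that] hx_lt by simp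
      have Lsplit: "L ?u1 - L ?u2 = h *\<^sub>R L y"
        using bounded_linear.linear[OF blL] by (simp add: linear_add linear_scale)
      have "psi' t - h *\<^sub>R L y = (H (p + ?u1) - H p - L ?u1) - (H (p + ?u2) - H p - L ?u2)"
        unfolding psi'_def using Lsplit by (simp add: algebra_simps)
      then have "norm (psi' t - h *\<^sub>R L y) \<le> norm (H (p + ?u1) - H p - L ?u1) + norm (H (p + ?u2) - H p - L ?u2)"
        by (metis norm_triangle_ineq4)
      also have "\<dots> \<le> (e / C) * norm ?u1 + (e / C) * norm ?u2" using e1 e2 by simp
      also have "\<dots> \<le> (e / C) * (h * (norm x + norm y)) + (e / C) * (h * norm x)"
        using nxy[OF that] nx[OF that] e C by (intro add_mono mult_left_mono) auto
      also have "\<dots> = (e / C) * h * (2 * norm x + norm y)" by (simp add: algebra_simps)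
      also have "\<dots> \<le> (e / C) * h * C" using e C hh unfolding C_def by (intro mult_left_mono) auto
      also have "\<dots> = e * h" using C by simp
      finally show ?thesis .
    qed
    have "norm (psi h - psi 0 - h *\<^sub>R (h *\<^sub>R L y)) \<le> (e * h) * h"
      by (rule mvt_bound_const[of h psi psi']) (use hh psider bnd in auto)
    then show "norm (f (p + h *\<^sub>R x + h *\<^sub>R y) - f (p + h *\<^sub>R x) - f (p + h *\<^sub>R y) + f p
           - (h * h) *\<^sub>R frechet_derivative (\<lambda>q. frechet_derivative f (at q) x) (at p) y) \<le> e * (h * h)"
      unfolding psi_def L_def H_def by (simp add: algebra_simps)
  qed
qed

lemma second_deriv_sym:
  fixes f :: "'a::real_normed_vector \<Rightarrow> 'b::real_normed_vector"
  assumes S: "open S" "p \<in> S"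
    and df: "\<And>q. q \<in> S \<Longrightarrow> f differentiable (at q)"
    and ddx: "(\<lambda>q. frechet_derivative f (at q) x) differentiable (at p)"
    and ddy: "(\<lambda>q. frechet_derivative f (at q) y) differentiable (at p)"
  shows "frechet_derivative (\<lambda>q. frechet_derivative f (at q) x) (at p) y =
         frechet_derivative (\<lambda>q. frechet_derivative f (at q) y) (at p) x"
proof -
  define A where "A = frechet_derivative (\<lambda>q. frechet_derivative f (at q) x) (at p) y"
  define B where "B = frechet_derivative (\<lambda>q. frechet_derivative f (at q) y) (at p) x"
  define D where "D h = f (p + h *\<^sub>R x + h *\<^sub>R y) - f (p + h *\<^sub>R x) - f (p + h *\<^sub>R y) + f p" for h
  have "norm (A - B) \<le> 2 * e" if e: "e > 0" for e
  proof -
    obtain h1 where h1: "h1 > 0" "\<And>h. 0 < h \<and> h < h1 \<Longrightarrow> norm (D h - (h * h) *\<^sub>R A) \<le> e * (h * h)"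
      using second_deriv_estimate[OF S df ddx e, of y] unfolding D_def A_def by blast
    obtain h2 where h2': "h2 > 0" "\<forall>h. 0 < h \<and> h < h2 \<longrightarrow> norm (f (p + h *\<^sub>R y + h *\<^sub>R x) - f (p + h *\<^sub>R y) - f (p + h *\<^sub>R x) + f p - (h * h) *\<^sub>R B) \<le> e * (h * h)"
      using second_deriv_estimate[OF S df ddy e, of x] unfolding B_def by blast
    have Deq: "f (p + h *\<^sub>R y + h *\<^sub>R x) - f (p + h *\<^sub>R y) - f (p + h *\<^sub>R x) + f p = D h" for h
      unfolding D_def by (simp add: algebra_simps)
    have h2: "h2 > 0" "\<And>h. 0 < h \<and> h < h2 \<Longrightarrow> norm (D h - (h * h) *\<^sub>R B) \<le> e * (h * h)"
      using h2' Deq by auto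
    define h where "h = min h1 h2 / 2"
    have hp: "0 < h" "h < h1" "h < h2" using h1 h2 unfolding h_def by auto
    have "norm ((h * h) *\<^sub>R (A - B)) = norm ((D h - (h * h) *\<^sub>R B) - (D h - (h * h) *\<^sub>R A))"
      by (simp add: algebra_simps)
    also have "\<dots> \<le> norm (D h - (h * h) *\<^sub>R B) + norm (D h - (h * h) *\<^sub>R A)" by (rule norm_triangle_ineq4)
    also have "\<dots> \<le> e * (h * h) + e * (h * h)" using h1(2) h2(2) hp by (intro add_mono) auto
    finally have "(h * h) * norm (A - B) \<le> (2 * e) * (h * h)" using hp by simp
    then show ?thesis using hp by (simp add: mult.commute)
  qed
  then have "norm (A - B) = 0"
  proof -
    assume *: "\<And>e. e > 0 \<Longrightarrow> norm (A - B) \<le> 2 * e"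
    show ?thesis
    proof (rule ccontr)
      assume "norm (A - B) \<noteq> 0"
      then have "norm (A - B) > 0" by simp
      from *[of "norm (A - B) / 4"] this show False by simp
    qed
  qed
  then show ?thesis unfolding A_def B_def by simp
qed

lemma dot_mv: "(x::real^'n) \<bullet> (A *v y) = (transpose A *v x) \<bullet> y"

  by (simp add: dot_lmul_matrix)

lemma dot_mv_sym: "transpose A = A \<Longrightarrow> (x::real^'n) \<bullet> (A *v y) = y \<bullet> (A *v x)"
  by (metis dot_mv inner_commute)

lemma gp_add1[simp]: "gp G p (x + y) z = gp G p x z + gp G p y z"
  by (simp add: gp_def inner_add_left)
lemma gp_add2[simp]: "gp G p z (x + y) = gp G p z x + gp G p z y"
  by (simp add: gp_def matrix_vector_right_distrib inner_add_right)
lemma gp_diff1[simp]: "gp G p (x - y) z = gp G p x z - gp G p y z"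
  by (simp add: gp_def inner_diff_left)
lemma gp_diff2[simp]: "gp G p z (x - y) = gp G p z x - gp G p z y"
  by (simp add: gp_def matrix_vector_mult_diff_distrib inner_diff_right)
lemma gp_minus1[simp]: "gp G p (- x) z = - gp G p x z"
  by (simp add: gp_def)
lemma gp_scale1[simp]: "gp G p (c *\<^sub>R x) z = c * gp G p x z"
  by (simp add: gp_def)
lemma gp_scale2[simp]: "gp G p z (c *\<^sub>R x) = c * gp G p z x"
  by (simp add: gp_def matrix_vector_mult_scaleR)
lemma gp_minus2[simp]: "gp G p z (- x) = - gp G p z x"
  using gp_scale2[of G p z "-1" x] by simp
lemma gp_zero1[simp]: "gp G p 0 z = 0" by (simp add: gp_def)
lemma gp_zero2[simp]: "gp G p z 0 = 0" by (simp add: gp_def)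
lemma gp_sum1: "gp G p (\<Sum>i\<in>I. f i) z = (\<Sum>i\<in>I. gp G p (f i) z)"
  by (induction I rule: infinite_finite_induct) auto
lemma gp_sum2: "gp G p z (\<Sum>i\<in>I. f i) = (\<Sum>i\<in>I. gp G p z (f i))"
  by (induction I rule: infinite_finite_induct) auto

lemma inv_props: "invertible (A::real^'n^'n) \<Longrightarrow> A ** matrix_inv A = mat 1 \<and> matrix_inv A ** A = mat 1"
  unfolding invertible_def matrix_inv_def by (rule someI_ex)

lemma posdef_invertible:
  assumes "\<forall>x. x \<noteq> 0 \<longrightarrow> (x::real^'n) \<bullet> (A *v x) > 0"
  shows "invertible A"
proof -
  have "inj ((*v) A)"
  proof (rule injI)
    fix x y assume "A *v x = A *v y"
    then have "A *v (x - y) = 0" by (simp add: matrix_vector_mult_diff_distrib)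
    then have "(x - y) \<bullet> (A *v (x - y)) = 0" by simp
    then show "x = y" using assms by (metis less_irrefl eq_iff_diff_eq_0)
  qed
  then show ?thesis using invertible_left_inverse matrix_left_invertible_injective by blast
qed

lemma vec_expand: "(z::real^'n) = (\<Sum>l\<in>UNIV. z $ l *\<^sub>R axis l 1)"
  using basis_expansion[of z] by (simp add: scalar_mult_eq_scaleR)

lemma linear_expand: "linear f \<Longrightarrow> f (z::real^'n) = (\<Sum>l\<in>UNIV. z $ l *\<^sub>R f (axis l 1))"
  by (subst vec_expand) (simp add: linear_sum linear_scale)

lemma dot_expand: "(\<Sum>l\<in>UNIV. (z::real^'n) $ l * (y \<bullet> axis l 1)) = y \<bullet> z"
  by (subst (2) vec_expand) (simp add: inner_sum_right mult.commute)

lemma mv_sum_left: "(\<Sum>i\<in>I. A i) *v (y::real^'n) = (\<Sum>i\<in>I. A i *v y)"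
  by (induction I rule: infinite_finite_induct) (auto simp: matrix_vector_mult_add_rdistrib)

lemma mv_scaleR_left: "(c *\<^sub>R A) *v (y::real^'n) = c *\<^sub>R (A *v y)"
  by (simp add: scaleR_matrix_vector_assoc)

lemma koszul:
  fixes G :: "real^'m \<Rightarrow> real^'m^'m"
  assumes sym: "transpose (G q) = G q" and inv: "invertible (G q)"
    and lin: "linear (frechet_derivative G (at q))"
  shows "gp G q (Gam G q x y) z = (1/2) * (y \<bullet> (frechet_derivative G (at q) x *v z)
            + x \<bullet> (frechet_derivative G (at q) y *v z) - x \<bullet> (frechet_derivative G (at q) z *v y))"
proof -
  define D where "D = frechet_derivative G (at q)"
  define K where "K = (\<chi> l. (1/2) * ( y \<bullet> (D x *v axis l 1) + x \<bullet> (D y *v axis l 1)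
              - x \<bullet> (D (axis l 1) *v y)))"
  have "gp G q (Gam G q x y) z = (matrix_inv (G q) *v K) \<bullet> (G q *v z)"
    unfolding gp_def Gam_def K_def D_def ..
  also have "\<dots> = (G q *v (matrix_inv (G q) *v K)) \<bullet> z"
    by (metis dot_mv inner_commute sym)
  also have "\<dots> = K \<bullet> z" using inv_props[OF inv] by (simp add: matrix_vector_mul_assoc)
  also have "\<dots> = (\<Sum>l\<in>UNIV. z $ l * K $ l)" by (simp add: inner_vec_def mult.commute)
  also have "\<dots> = (1/2) * ((\<Sum>l\<in>UNIV. z $ l * (y \<bullet> (D x *v axis l 1)))
        + (\<Sum>l\<in>UNIV. z $ l * (x \<bullet> (D y *v axis l 1))) - (\<Sum>l\<in>UNIV. z $ l * (x \<bullet> (D (axis l 1) *v y))))"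
  proof -
    have e: "\<And>l. z $ l * K $ l = (1/2) * (z $ l * (y \<bullet> (D x *v axis l 1)) + z $ l * (x \<bullet> (D y *v axis l 1))
               - z $ l * (x \<bullet> (D (axis l 1) *v y)))"
      unfolding K_def by (simp add: ring_distribs)
    have "(\<Sum>l\<in>UNIV. z $ l * K $ l) = (\<Sum>l\<in>UNIV. (1/2) * (z $ l * (y \<bullet> (D x *v axis l 1)) + z $ l * (x \<bullet> (D y *v axis l 1))
               - z $ l * (x \<bullet> (D (axis l 1) *v y))))"
      by (rule sum.cong[OF refl e])
    then show ?thesis by (simp only: sum_distrib_left[symmetric] sum.distrib sum_subtractf)
  qed
  also have "(\<Sum>l\<in>UNIV. z $ l * (y \<bullet> (D x *v axis l 1))) = y \<bullet> (D x *v z)"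
  proof -
    have "(\<Sum>l\<in>UNIV. z $ l * (y \<bullet> (D x *v axis l 1))) = (\<Sum>l\<in>UNIV. z $ l * ((transpose (D x) *v y) \<bullet> axis l 1))"
      by (simp add: dot_mv)
    also have "\<dots> = (transpose (D x) *v y) \<bullet> z" by (rule dot_expand)
    finally show ?thesis by (simp add: dot_mv)
  qed
  also have "(\<Sum>l\<in>UNIV. z $ l * (x \<bullet> (D y *v axis l 1))) = x \<bullet> (D y *v z)"
  proof -
    have "(\<Sum>l\<in>UNIV. z $ l * (x \<bullet> (D y *v axis l 1))) = (\<Sum>l\<in>UNIV. z $ l * ((transpose (D y) *v x) \<bullet> axis l 1))"
      by (simp add: dot_mv)
    also have "\<dots> = (transpose (D y) *v x) \<bullet> z" by (rule dot_expand)
    finally show ?thesis by (simp add: dot_mv)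
  qed
  also have "(\<Sum>l\<in>UNIV. z $ l * (x \<bullet> (D (axis l 1) *v y))) = x \<bullet> (D z *v y)"
  proof -
    have "D z = (\<Sum>l\<in>UNIV. z $ l *\<^sub>R D (axis l 1))" using lin unfolding D_def by (rule linear_expand)
    then have "D z *v y = (\<Sum>l\<in>UNIV. z $ l *\<^sub>R (D (axis l 1) *v y))"
      by (simp add: mv_sum_left mv_scaleR_left)
    then show ?thesis by (simp add: inner_sum_right)
  qed
  finally show ?thesis unfolding D_def .
qed

lemma bilinear_mv: "bilinear (\<lambda>(A::real^'n^'m) (x::real^'n). A *v x)"
  unfolding bilinear_def
  by (auto intro!: linearI simp: matrix_vector_right_distrib matrix_vector_mult_scaleR
       matrix_vector_mult_add_rdistrib mv_scaleR_left)

lemma bb_mv: "bounded_bilinear (\<lambda>(A::real^'n^'m) (x::real^'n). A *v x)"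
  using bilinear_mv bilinear_conv_bounded_bilinear by blast

lemma has_derivative_mv:
  fixes M :: "'a::real_normed_vector \<Rightarrow> real^'n^'m" and v :: "'a \<Rightarrow> real^'n"
  assumes "(M has_derivative M') (at x)" "(v has_derivative v') (at x)"
  shows "((\<lambda>q. M q *v v q) has_derivative (\<lambda>h. M x *v v' h + M' h *v v x)) (at x)"
  using bounded_bilinear.FDERIV[OF bb_mv assms] .

lemma has_derivative_gp:
  fixes G :: "real^'m \<Rightarrow> real^'m^'m"
  assumes "(G has_derivative G') (at x)" "(A has_derivative A') (at x)" "(B has_derivative B') (at x)"
  shows "((\<lambda>q. gp G q (A q) (B q)) has_derivative
     (\<lambda>h. A' h \<bullet> (G x *v B x) + A x \<bullet> (G' h *v B x) + A x \<bullet> (G x *v B' h))) (at x)"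
proof -
  have "((\<lambda>q. G q *v B q) has_derivative (\<lambda>h. G x *v B' h + G' h *v B x)) (at x)"
    by (rule has_derivative_mv[OF assms(1,3)])
  from has_derivative_inner[OF assms(2) this] show ?thesis
    unfolding gp_def by (simp add: inner_add_right algebra_simps)
qed

lemma Ck_on_D: "Ck_on (Suc k) S f \<Longrightarrow> Ck_on k S (\<lambda>x. frechet_derivative f (at x) v)"
  by simp

lemma smooth_on_D: "smooth_on S f \<Longrightarrow> smooth_on S (\<lambda>x. frechet_derivative f (at x) v)"
  unfolding smooth_on_def by (metis Ck_on_D)

lemma smooth_diff: "smooth_on S f \<Longrightarrow> open S \<Longrightarrow> q \<in> S \<Longrightarrow> f differentiable (at q)"
  unfolding smooth_on_def
  by (metis Ck_on.simps(2) differentiable_on_eq_differentiable_at)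

lemma smooth_hasD: "smooth_on S f \<Longrightarrow> open S \<Longrightarrow> q \<in> S \<Longrightarrow> (f has_derivative frechet_derivative f (at q)) (at q)"
  using smooth_diff frechet_derivative_works by blast

lemma smooth_lin: "smooth_on S f \<Longrightarrow> open S \<Longrightarrow> q \<in> S \<Longrightarrow> linear (frechet_derivative f (at q))"
  using smooth_diff linear_frechet_derivative by blast

lemma bounded_linear_transpose: "bounded_linear (transpose :: real^'n^'m \<Rightarrow> real^'m^'n)"
proof -
  have "linear (transpose :: real^'n^'m \<Rightarrow> real^'m^'n)"
    by (rule linearI) (simp_all add: transpose_def vec_eq_iff)
  then show ?thesis using linear_conv_bounded_linear by blast
qed

lemma deriv_sym:
  fixes G :: "real^'m \<Rightarrow> real^'m^'m"
  assumes "open S" "q \<in> S" "\<And>r. r \<in> S \<Longrightarrow> transpose (G r) = G r" "G differentiable (at q)"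
  shows "transpose (frechet_derivative G (at q) v) = frechet_derivative G (at q) v"
proof -
  have d: "(G has_derivative frechet_derivative G (at q)) (at q)"
    using assms(4) frechet_derivative_works by blast
  have "((\<lambda>r. transpose (G r)) has_derivative (\<lambda>h. transpose (frechet_derivative G (at q) h))) (at q)"
    using bounded_linear.has_derivative[OF bounded_linear_transpose d] .
  then have "(G has_derivative (\<lambda>h. transpose (frechet_derivative G (at q) h))) (at q)"
    by (rule has_derivative_transform_within_open[OF _ assms(1,2)]) (use assms(3) in auto)
  then have "(\<lambda>h. transpose (frechet_derivative G (at q) h)) = frechet_derivative G (at q)"
    by (rule frechet_derivative_at)
  then show ?thesis by (metis)
qed

lemma deriv_eq_on_open:
  assumes "(F has_derivative F') (at p)" "(H has_derivative H') (at p)" "open U" "p \<in> U"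
    "\<And>r. r \<in> U \<Longrightarrow> F r = H r"
  shows "F' = H'"
proof -
  have "(F has_derivative H') (at p)"
    by (rule has_derivative_transform_within_open[OF assms(2) assms(3,4)]) (use assms(5) in auto)
  then show ?thesis using assms(1) has_derivative_unique by blast
qed

lemma gp_nondeg:
  assumes "\<forall>x. x \<noteq> 0 \<longrightarrow> gp G q x x > 0" "\<And>z. gp G q a z = gp G q b z"
  shows "a = b"
proof -
  have "gp G q (a - b) (a - b) = 0" using assms(2)[of "a - b"] by simp
  then show ?thesis using assms(1) by (metis eq_iff_diff_eq_0 less_irrefl)
qed

lemma gp_sym: "transpose (G q) = G q \<Longrightarrow> gp G q x y = gp G q y x"
  unfolding gp_def by (rule dot_mv_sym)

lemma compat:
  fixes G :: "real^'m \<Rightarrow> real^'m^'m"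
  assumes sym: "transpose (G q) = G q" and inv: "invertible (G q)"
    and lin: "linear (frechet_derivative G (at q))"
    and dsym: "\<And>v. transpose (frechet_derivative G (at q) v) = frechet_derivative G (at q) v"
  shows "gp G q (Gam G q x y) z + gp G q y (Gam G q x z) = y \<bullet> (frechet_derivative G (at q) x *v z)"
proof -
  have "gp G q y (Gam G q x z) = gp G q (Gam G q x z) y" by (rule gp_sym[of G q, OF sym])
  then show ?thesis
    using koszul[OF sym inv lin, of x y z] koszul[OF sym inv lin, of x z y]
      dot_mv_sym[OF dsym, of y x z] dot_mv_sym[OF dsym, of x z y] dot_mv_sym[OF dsym, of x y z]
    by (simp add: algebra_simps)
qed

lemma acm_alg:
  fixes G Phi :: "real^'m \<Rightarrow> real^'m^'m" and Z :: "real^'m \<Rightarrow> real^'m"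
  assumes pos: "\<forall>x. x \<noteq> 0 \<longrightarrow> gp G q x x > 0" and sym: "transpose (G q) = G q"
    and unit: "gp G q (Z q) (Z q) = 1"
    and phi2: "\<And>x. Phi q *v (Phi q *v x) = - x + etaf G Z q x *\<^sub>R Z q"
    and met: "\<And>x y. gp G q (Phi q *v x) (Phi q *v y) = gp G q x y - etaf G Z q x * etaf G Z q y"
  shows "Phi q *v Z q = 0" "\<And>x. etaf G Z q (Phi q *v x) = 0"
    "\<And>x y. gp G q (Phi q *v x) y = - gp G q x (Phi q *v y)"
proof -
  have ez: "etaf G Z q (Z q) = 1" using unit by (simp add: etaf_def)
  have "gp G q (Phi q *v Z q) (Phi q *v Z q) = 0" using met[of "Z q" "Z q"] ez unit by simp
  then show pz: "Phi q *v Z q = 0" using pos by force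
  have zne: "Z q \<noteq> 0" using unit by auto
  fix x
  have a: "Phi q *v (Phi q *v (Phi q *v x)) = - (Phi q *v x)"
  proof -
    have "Phi q *v (Phi q *v (Phi q *v x)) = Phi q *v (- x + etaf G Z q x *\<^sub>R Z q)" using phi2[of x] by simp
    also have "\<dots> = - (Phi q *v x)" using pz by (simp add: matrix_vector_right_distrib matrix_vector_mult_scaleR matrix_vector_mult_diff_distrib)
    finally show ?thesis .
  qed
  have b: "Phi q *v (Phi q *v (Phi q *v x)) = - (Phi q *v x) + etaf G Z q (Phi q *v x) *\<^sub>R Z q"
    by (rule phi2)
  from a b have "etaf G Z q (Phi q *v x) *\<^sub>R Z q = 0" by simp
  then show ex: "etaf G Z q (Phi q *v x) = 0" using zne by simp
  fix y
  have e1: "etaf G Z q (Phi q *v y) = 0"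
  proof -
    have a: "Phi q *v (Phi q *v (Phi q *v y)) = - (Phi q *v y)"
    proof -
      have "Phi q *v (Phi q *v (Phi q *v y)) = Phi q *v (- y + etaf G Z q y *\<^sub>R Z q)" using phi2[of y] by simp
      also have "\<dots> = - (Phi q *v y)" using pz by (simp add: matrix_vector_right_distrib matrix_vector_mult_scaleR matrix_vector_mult_diff_distrib)
      finally show ?thesis .
    qed
    have b: "Phi q *v (Phi q *v (Phi q *v y)) = - (Phi q *v y) + etaf G Z q (Phi q *v y) *\<^sub>R Z q"
      by (rule phi2)
    from a b have "etaf G Z q (Phi q *v y) *\<^sub>R Z q = 0" by simp
    then show ?thesis using zne by simp
  qed
  have "gp G q (Phi q *v x) (Phi q *v (Phi q *v y)) = gp G q x (Phi q *v y)"
    using met[of x "Phi q *v y"] e1 by simp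
  moreover have "gp G q (Phi q *v x) (Phi q *v (Phi q *v y)) = - gp G q (Phi q *v x) y"
    using phi2[of y] ex gp_sym[of G q, OF sym] by (simp add: etaf_def)
  ultimately show "gp G q (Phi q *v x) y = - gp G q x (Phi q *v y)" by simp
qed

locale acm_pt =
  fixes U :: "(real^'m) set" and G Phi :: "real^'m \<Rightarrow> real^'m^'m" and Z :: "real^'m \<Rightarrow> real^'m"
    and p :: "real^'m"
  assumes acm: "almost_contact_metric_on U G Phi Z" and pU: "p \<in> U"
begin

lemma opU: "open U" using acm unfolding almost_contact_metric_on_def by simp
lemma sG: "smooth_on U G" using acm unfolding almost_contact_metric_on_def riem_metric_on_def by simp
lemma sPhi: "smooth_on U Phi" using acm unfolding almost_contact_metric_on_def by simp
lemma sZ: "smooth_on U Z" using acm unfolding almost_contact_metric_on_def by simp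
lemma symG: "r \<in> U \<Longrightarrow> transpose (G r) = G r"
  using acm unfolding almost_contact_metric_on_def riem_metric_on_def by simp
lemma posG: "r \<in> U \<Longrightarrow> \<forall>x. x \<noteq> 0 \<longrightarrow> gp G r x x > 0"
  using acm unfolding almost_contact_metric_on_def riem_metric_on_def by simp
lemma invG: "r \<in> U \<Longrightarrow> invertible (G r)"
  using posG[of r] posdef_invertible unfolding gp_def by blast
lemma unitZ: "r \<in> U \<Longrightarrow> gp G r (Z r) (Z r) = 1"
  using acm unfolding almost_contact_metric_on_def by simp
lemma phi2: "r \<in> U \<Longrightarrow> Phi r *v (Phi r *v x) = - x + etaf G Z r x *\<^sub>R Z r"
  using acm unfolding almost_contact_metric_on_def by simp
lemma phimet: "r \<in> U \<Longrightarrow> gp G r (Phi r *v x) (Phi r *v y) = gp G r x y - etaf G Z r x * etaf G Z r y"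
  using acm unfolding almost_contact_metric_on_def by simp
lemma phiZ: assumes "r \<in> U" shows "Phi r *v Z r = 0"
  using acm_alg[where G=G and q=r and Z=Z and Phi=Phi, OF posG[OF assms] symG[OF assms] unitZ[OF assms] phi2[OF assms] phimet[OF assms]] by blast
lemma etaphi: assumes "r \<in> U" shows "etaf G Z r (Phi r *v x) = 0"
  using acm_alg[where G=G and q=r and Z=Z and Phi=Phi, OF posG[OF assms] symG[OF assms] unitZ[OF assms] phi2[OF assms] phimet[OF assms]] by blast
lemma phiskew: assumes "r \<in> U" shows "gp G r (Phi r *v x) y = - gp G r x (Phi r *v y)"
  using acm_alg[where G=G and q=r and Z=Z and Phi=Phi, OF posG[OF assms] symG[OF assms] unitZ[OF assms] phi2[OF assms] phimet[OF assms]] by blast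
lemma linDG: "r \<in> U \<Longrightarrow> linear (frechet_derivative G (at r))"
  using smooth_lin[OF sG opU] .
lemma dsymG: "r \<in> U \<Longrightarrow> transpose (frechet_derivative G (at r) v) = frechet_derivative G (at r) v"
  using deriv_sym[OF opU _ symG smooth_diff[OF sG opU]] by blast
lemma compatU: "r \<in> U \<Longrightarrow> gp G r (Gam G r x y) z + gp G r y (Gam G r x z) = y \<bullet> (frechet_derivative G (at r) x *v z)"
  using compat[OF symG invG linDG dsymG] by blast
lemma koszulU: "r \<in> U \<Longrightarrow> gp G r (Gam G r x y) z = (1/2) * (y \<bullet> (frechet_derivative G (at r) x *v z)
            + x \<bullet> (frechet_derivative G (at r) y *v z) - x \<bullet> (frechet_derivative G (at r) z *v y))"
  using koszul[OF symG invG linDG] by blast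
lemma nondeg: "r \<in> U \<Longrightarrow> (\<And>z. gp G r a z = gp G r b z) \<Longrightarrow> a = b"
  using gp_nondeg[OF posG] by blast
lemma gsym: "r \<in> U \<Longrightarrow> gp G r x y = gp G r y x" using gp_sym[of G r, OF symG] by blast

lemma Gam_add2: "r \<in> U \<Longrightarrow> Gam G r x (y1 + y2) = Gam G r x y1 + Gam G r x y2"
  by (rule nondeg) (auto simp: koszulU linDG linear_add algebra_simps inner_add_left inner_add_right
      matrix_vector_right_distrib matrix_vector_mult_add_rdistrib)
lemma Gam_scale2: "r \<in> U \<Longrightarrow> Gam G r x (c *\<^sub>R y) = c *\<^sub>R Gam G r x y"
  by (rule nondeg) (auto simp: koszulU linDG linear_scale algebra_simps
      matrix_vector_mult_scaleR mv_scaleR_left)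
lemma Gam_add1: "r \<in> U \<Longrightarrow> Gam G r (x1 + x2) y = Gam G r x1 y + Gam G r x2 y"
  by (rule nondeg) (auto simp: koszulU linDG linear_add algebra_simps inner_add_left inner_add_right
      matrix_vector_right_distrib matrix_vector_mult_add_rdistrib)
lemma Gam_scale1: "r \<in> U \<Longrightarrow> Gam G r (c *\<^sub>R x) y = c *\<^sub>R Gam G r x y"
  by (rule nondeg) (auto simp: koszulU linDG linear_scale algebra_simps
      matrix_vector_mult_scaleR mv_scaleR_left)

end

context acm_pt begin

abbreviation "DG \<equiv> frechet_derivative G (at p)"
abbreviation "DPhi \<equiv> frechet_derivative Phi (at p)"
abbreviation "DZ \<equiv> frechet_derivative Z (at p)"

lemma hG: "(G has_derivative DG) (at p)" using smooth_hasD[OF sG opU pU] .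
lemma hPhi: "(Phi has_derivative DPhi) (at p)" using smooth_hasD[OF sPhi opU pU] .
lemma hZ: "(Z has_derivative DZ) (at p)" using smooth_hasD[OF sZ opU pU] .
lemma linDPhi: "linear DPhi" using smooth_lin[OF sPhi opU pU] .
lemma linDZ: "linear DZ" using smooth_lin[OF sZ opU pU] .

lemma hconst: "((\<lambda>r. c) has_derivative (\<lambda>h. 0)) (at p)" by simp

lemma wZ: "gp G p (covV G p x Z) (Z p) = 0"
proof -
  have d: "((\<lambda>r. gp G r (Z r) (Z r)) has_derivative
     (\<lambda>h. DZ h \<bullet> (G p *v Z p) + Z p \<bullet> (DG h *v Z p) + Z p \<bullet> (G p *v DZ h))) (at p)"
    by (rule has_derivative_gp[OF hG hZ hZ])
  have eqf: "(\<lambda>h. DZ h \<bullet> (G p *v Z p) + Z p \<bullet> (DG h *v Z p) + Z p \<bullet> (G p *v DZ h)) = (\<lambda>h. 0)"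
    by (rule deriv_eq_on_open[OF d hconst opU pU]) (use unitZ in auto)
  have e: "gp G p (DZ x) (Z p) + Z p \<bullet> (DG x *v Z p) + gp G p (Z p) (DZ x) = 0"
    using fun_cong[OF eqf, of x] by (simp add: gp_def)
  have c: "gp G p (Gam G p x (Z p)) (Z p) + gp G p (Z p) (Gam G p x (Z p)) = Z p \<bullet> (DG x *v Z p)"
    using compatU[OF pU] .
  show ?thesis using e c gsym[OF pU, of "Z p" "DZ x"] gsym[OF pU, of "Z p" "Gam G p x (Z p)"]
    unfolding covV_def by simp
qed

lemma hEta: "((\<lambda>r. etaf G Z r y) has_derivative (\<lambda>h. y \<bullet> (DG h *v Z p) + y \<bullet> (G p *v DZ h))) (at p)"
  using has_derivative_gp[OF hG hconst[of y] hZ] unfolding etaf_def by simp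

lemma covEta_eq: "covEta G Z p x y = gp G p y (covV G p x Z)"
proof -
  have fd: "frechet_derivative (\<lambda>r. etaf G Z r y) (at p) = (\<lambda>h. y \<bullet> (DG h *v Z p) + y \<bullet> (G p *v DZ h))"
    using frechet_derivative_at[OF hEta] by simp
  have c: "gp G p (Gam G p x y) (Z p) + gp G p y (Gam G p x (Z p)) = y \<bullet> (DG x *v Z p)"
    using compatU[OF pU] .
  show ?thesis unfolding covEta_def fd covV_def using c by (simp add: etaf_def gp_def matrix_vector_right_distrib inner_add_right)
qed

lemma hPhiv: "((\<lambda>r. Phi r *v v) has_derivative (\<lambda>h. DPhi h *v v)) (at p)"
  using has_derivative_mv[OF hPhi hconst[of v]] by simp

lemma S_skew: "gp G p (covPhi G Phi p x y) z = - gp G p y (covPhi G Phi p x z)"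
proof -
  have d1: "((\<lambda>r. gp G r (Phi r *v y) z) has_derivative
     (\<lambda>h. (DPhi h *v y) \<bullet> (G p *v z) + (Phi p *v y) \<bullet> (DG h *v z) + (Phi p *v y) \<bullet> (G p *v 0))) (at p)"
    by (rule has_derivative_gp[OF hG hPhiv hconst])
  have d2: "((\<lambda>r. gp G r y (Phi r *v z)) has_derivative
     (\<lambda>h. 0 \<bullet> (G p *v (Phi p *v z)) + y \<bullet> (DG h *v (Phi p *v z)) + y \<bullet> (G p *v (DPhi h *v z)))) (at p)"
    by (rule has_derivative_gp[OF hG hconst hPhiv])
  have d: "((\<lambda>r. gp G r (Phi r *v y) z + gp G r y (Phi r *v z)) has_derivative
     (\<lambda>h. ((DPhi h *v y) \<bullet> (G p *v z) + (Phi p *v y) \<bullet> (DG h *v z) + (Phi p *v y) \<bullet> (G p *v 0))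
         + (0 \<bullet> (G p *v (Phi p *v z)) + y \<bullet> (DG h *v (Phi p *v z)) + y \<bullet> (G p *v (DPhi h *v z))))) (at p)"
    by (rule has_derivative_add[OF d1 d2])
  have eqf: "(\<lambda>h. ((DPhi h *v y) \<bullet> (G p *v z) + (Phi p *v y) \<bullet> (DG h *v z) + (Phi p *v y) \<bullet> (G p *v 0))
         + (0 \<bullet> (G p *v (Phi p *v z)) + y \<bullet> (DG h *v (Phi p *v z)) + y \<bullet> (G p *v (DPhi h *v z)))) = (\<lambda>h. 0)"
    by (rule deriv_eq_on_open[OF d hconst opU pU]) (use phiskew in auto)
  have e: "gp G p (DPhi x *v y) z + (Phi p *v y) \<bullet> (DG x *v z) + y \<bullet> (DG x *v (Phi p *v z))
      + gp G p y (DPhi x *v z) = 0"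
    using fun_cong[OF eqf, of x] by (simp add: gp_def)
  have c1: "gp G p (Gam G p x (Phi p *v y)) z + gp G p (Phi p *v y) (Gam G p x z) = (Phi p *v y) \<bullet> (DG x *v z)"
    using compatU[OF pU] .
  have c2: "gp G p (Gam G p x y) (Phi p *v z) + gp G p y (Gam G p x (Phi p *v z)) = y \<bullet> (DG x *v (Phi p *v z))"
    using compatU[OF pU] .
  have s1: "gp G p (Phi p *v Gam G p x y) z = - gp G p (Gam G p x y) (Phi p *v z)" using phiskew[OF pU] .
  have s2: "gp G p y (Phi p *v Gam G p x z) = - gp G p (Phi p *v y) (Gam G p x z)"
    using phiskew[OF pU, of y "Gam G p x z"] by simp
  show ?thesis unfolding covPhi_def
    by (simp only: gp_add1 gp_add2 gp_diff1 gp_diff2) (use e c1 c2 s1 s2 in linarith)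
qed

lemma S_phi: "covPhi G Phi p x (Phi p *v y) + Phi p *v covPhi G Phi p x y
   = covEta G Z p x y *\<^sub>R Z p + etaf G Z p y *\<^sub>R covV G p x Z"
proof -
  have dF: "((\<lambda>r. Phi r *v (Phi r *v y)) has_derivative (\<lambda>h. Phi p *v (DPhi h *v y) + DPhi h *v (Phi p *v y))) (at p)"
    by (rule has_derivative_mv[OF hPhi hPhiv])
  define E' where "E' = frechet_derivative (\<lambda>r. etaf G Z r y) (at p)"
  have hE: "((\<lambda>r. etaf G Z r y) has_derivative E') (at p)"
    unfolding E'_def using hEta[of y] by (simp add: frechet_derivative_at[OF hEta[of y], symmetric])
  have dH: "((\<lambda>r. - y + etaf G Z r y *\<^sub>R Z r) has_derivative (\<lambda>h. - 0 + (etaf G Z p y *\<^sub>R DZ h + E' h *\<^sub>R Z p))) (at p)"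
    by (intro has_derivative_add has_derivative_minus hconst has_derivative_scaleR hE hZ)
  have eqf: "(\<lambda>h. Phi p *v (DPhi h *v y) + DPhi h *v (Phi p *v y)) = (\<lambda>h. - 0 + (etaf G Z p y *\<^sub>R DZ h + E' h *\<^sub>R Z p))"
    by (rule deriv_eq_on_open[OF dF dH opU pU]) (use phi2 in auto)
  have e: "Phi p *v (DPhi x *v y) + DPhi x *v (Phi p *v y) = etaf G Z p y *\<^sub>R DZ x + E' x *\<^sub>R Z p"
    using fun_cong[OF eqf, of x] by simp
  have g1: "Gam G p x (Phi p *v (Phi p *v y)) = - Gam G p x y + etaf G Z p y *\<^sub>R Gam G p x (Z p)"
  proof -
    have a: "Phi p *v (Phi p *v y) = (-1) *\<^sub>R y + etaf G Z p y *\<^sub>R Z p"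
      using phi2[OF pU, of y] by simp
    have "Gam G p x (Phi p *v (Phi p *v y)) = Gam G p x ((-1) *\<^sub>R y) + Gam G p x (etaf G Z p y *\<^sub>R Z p)"
      unfolding a by (rule Gam_add2[OF pU])
    also have "\<dots> = (-1) *\<^sub>R Gam G p x y + etaf G Z p y *\<^sub>R Gam G p x (Z p)"
      by (simp only: Gam_scale2[OF pU])
    finally show ?thesis by simp
  qed
  have g2: "Phi p *v (Phi p *v Gam G p x y) = - Gam G p x y + etaf G Z p (Gam G p x y) *\<^sub>R Z p"
    using phi2[OF pU] .
  show ?thesis
    unfolding covPhi_def covEta_def covV_def E'_def[symmetric]
    using e
    by (simp add: g1 g2 matrix_vector_right_distrib matrix_vector_mult_diff_distrib algebra_simps)
qed

end

context acm_pt begin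

abbreviation "SS x y \<equiv> covPhi G Phi p x y"
abbreviation "ww x \<equiv> covV G p x Z"
abbreviation "XI x y \<equiv> xi G Phi Z p x y"
abbreviation "gg x y \<equiv> gp G p x y"
abbreviation "eta y \<equiv> etaf G Z p y"

lemma eta_gp: "eta y = gg y (Z p)" by (simp add: etaf_def)
lemma eta_Z: "eta (Z p) = 1" using unitZ[OF pU] by (simp add: etaf_def)
lemma Gam_zero2: "Gam G p x 0 = 0" using Gam_scale2[OF pU, of x 0 0] by simp
lemma Gam_zero1: "Gam G p 0 y = 0" using Gam_scale1[OF pU, of 0 0 y] by simp

lemma SS_add2: "SS x (y1 + y2) = SS x y1 + SS x y2"
  unfolding covPhi_def by (simp add: Gam_add2[OF pU] matrix_vector_right_distrib algebra_simps)
lemma SS_scale2: "SS x (c *\<^sub>R y) = c *\<^sub>R SS x y"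
  unfolding covPhi_def by (simp add: Gam_scale2[OF pU] matrix_vector_mult_scaleR algebra_simps)
lemma SS_add1: "SS (x1 + x2) y = SS x1 y + SS x2 y"
  unfolding covPhi_def by (simp add: Gam_add1[OF pU] linear_add[OF linDPhi] matrix_vector_right_distrib
      matrix_vector_mult_add_rdistrib algebra_simps)
lemma SS_scale1: "SS (c *\<^sub>R x) y = c *\<^sub>R SS x y"
  unfolding covPhi_def by (simp add: Gam_scale1[OF pU] linear_scale[OF linDPhi] matrix_vector_mult_scaleR
      mv_scaleR_left algebra_simps)
lemma SS_zero2: "SS x 0 = 0" using SS_scale2[of x 0 0] by simp
lemma ww_add: "ww (x1 + x2) = ww x1 + ww x2"
  unfolding covV_def by (simp add: Gam_add1[OF pU] linear_add[OF linDZ] algebra_simps)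
lemma ww_scale: "ww (c *\<^sub>R x) = c *\<^sub>R ww x"
  unfolding covV_def by (simp add: Gam_scale1[OF pU] linear_scale[OF linDZ] algebra_simps)

lemma XI_eq: "XI x y = (1/2) *\<^sub>R SS x (Phi p *v y) + ((1/2) * gg y (ww x)) *\<^sub>R Z p - eta y *\<^sub>R ww x"
  unfolding xi_def covEta_eq ..

lemma XI_add2: "XI x (y1 + y2) = XI x y1 + XI x y2"
  unfolding XI_eq by (simp add: SS_add2 matrix_vector_right_distrib algebra_simps etaf_def)
lemma XI_scale2: "XI x (c *\<^sub>R y) = c *\<^sub>R XI x y"
  unfolding XI_eq by (simp add: SS_scale2 matrix_vector_mult_scaleR algebra_simps etaf_def)
lemma XI_add1: "XI (x1 + x2) y = XI x1 y + XI x2 y"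
  unfolding XI_eq by (simp add: SS_add1 ww_add algebra_simps)
lemma XI_scale1: "XI (c *\<^sub>R x) y = c *\<^sub>R XI x y"
  unfolding XI_eq by (simp add: SS_scale1 ww_scale algebra_simps)

lemma Phi_SZ: "Phi p *v SS x (Z p) = ww x"
proof -
  have "SS x (Phi p *v Z p) + Phi p *v SS x (Z p) = covEta G Z p x (Z p) *\<^sub>R Z p + eta (Z p) *\<^sub>R ww x"
    by (rule S_phi)
  moreover have "covEta G Z p x (Z p) = 0"
    unfolding covEta_eq using wZ gsym[OF pU] by metis
  ultimately show ?thesis using phiZ[OF pU] SS_zero2 eta_Z by simp
qed

lemma XI_Z: "XI x (Z p) = - ww x"
proof -
  have "gg (Z p) (ww x) = 0" using wZ gsym[OF pU] by metis
  then show ?thesis unfolding XI_eq using phiZ[OF pU] SS_zero2 eta_Z by simp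
qed

lemma eta_XI: "eta (XI x y) = gg y (ww x)"
proof -
  have a: "gg (SS x (Phi p *v y)) (Z p) = gg y (ww x)"
  proof -
    have "gg (SS x (Phi p *v y)) (Z p) = - gg (Phi p *v y) (SS x (Z p))" by (rule S_skew)
    also have "\<dots> = gg y (Phi p *v SS x (Z p))" using phiskew[OF pU] by simp
    finally show ?thesis using Phi_SZ by simp
  qed
  have b: "gg (ww x) (Z p) = 0" using wZ .
  show ?thesis unfolding XI_eq eta_gp using a b unitZ[OF pU] by simp
qed

lemma XI_perp: "XI x y = Phi p *v XI x (Phi p *v y) + eta (XI x y) *\<^sub>R Z p + eta y *\<^sub>R XI x (Z p)"
proof -
  have p2: "Phi p *v (Phi p *v y) = (-1) *\<^sub>R y + eta y *\<^sub>R Z p" using phi2[OF pU, of y] by simp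
  have s1: "SS x (Phi p *v (Phi p *v y)) = (-1) *\<^sub>R SS x y + eta y *\<^sub>R SS x (Z p)"
    unfolding p2 by (simp only: SS_add2 SS_scale2)
  have ep: "eta (Phi p *v y) = 0" using etaphi[OF pU] .
  have A: "Phi p *v XI x (Phi p *v y) = (-1/2) *\<^sub>R (Phi p *v SS x y) + (1/2 * eta y) *\<^sub>R ww x"
    unfolding XI_eq s1 using ep phiZ[OF pU] Phi_SZ
    by (simp add: matrix_vector_right_distrib matrix_vector_mult_diff_distrib matrix_vector_mult_scaleR algebra_simps)
  have B: "SS x (Phi p *v y) = - (Phi p *v SS x y) + gg y (ww x) *\<^sub>R Z p + eta y *\<^sub>R ww x"
    using S_phi[of x y] unfolding covEta_eq by (simp add: algebra_simps)
  show ?thesis unfolding eta_XI XI_Z A unfolding XI_eq B by (simp add: vec_eq_iff algebra_simps)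
qed

lemma XI_skew: "gg (XI x y) z = - gg y (XI x z)"
proof -
  have k: "gg y (SS x (Phi p *v z)) = gg (Phi p *v SS x y) z"
  proof -
    have "gg y (SS x (Phi p *v z)) = - gg (SS x y) (Phi p *v z)" using S_skew[of x y "Phi p *v z"] by simp
    also have "\<dots> = gg (Phi p *v SS x y) z" using phiskew[OF pU, of "SS x y" z] by simp
    finally show ?thesis .
  qed
  have B: "gg (SS x (Phi p *v y)) z + gg (Phi p *v SS x y) z = gg y (ww x) * gg (Z p) z + eta y * gg (ww x) z"
    using S_phi[of x y] unfolding covEta_eq by (metis gp_add1 gp_scale1)
  have s1: "gg (Z p) z = eta z" using gsym[OF pU] eta_gp by metis
  have s2: "gg y (Z p) = eta y" using eta_gp by metis
  have s3: "gg z (ww x) = gg (ww x) z" using gsym[OF pU] by metis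
  have s4: "gg y (ww x) = gg (ww x) y" using gsym[OF pU] by metis
  show ?thesis unfolding XI_eq using k B s1 s2 s3 s4 by (simp add: algebra_simps)
qed

end

locale acm_frame = acm_pt U G Phi Z p
  for U :: "(real^'m) set" and G Phi Z p +
  fixes n :: nat and e :: "nat \<Rightarrow> real^'m"
  assumes card: "CARD('m) = 2*n+1" and fr: "adapted_frame G Z p n e"
begin

abbreviation "EE a \<equiv> Efr n e (Z p) a"
abbreviation "NN \<equiv> 2*n+1"

lemma e_orth: "i < 2*n \<Longrightarrow> j < 2*n \<Longrightarrow> gg (e i) (e j) = (if i = j then 1 else 0)"
  using fr unfolding adapted_frame_def by blast
lemma e_eta: "i < 2*n \<Longrightarrow> eta (e i) = 0"
  using fr unfolding adapted_frame_def by blast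

lemma EE_orth: "a < NN \<Longrightarrow> b < NN \<Longrightarrow> gg (EE a) (EE b) = (if a = b then 1 else 0)"
proof -
  assume a: "a < NN" and b: "b < NN"
  consider "a < 2*n" "b < 2*n" | "a < 2*n" "b = 2*n" | "a = 2*n" "b < 2*n" | "a = 2*n" "b = 2*n"
    using a b by linarith
  then show ?thesis
  proof cases
    case 1 then show ?thesis by (simp add: Efr_def e_orth)
  next
    case 2 then show ?thesis using e_eta[of a] by (simp add: Efr_def eta_gp)
  next
    case 3 then show ?thesis using e_eta[of b] gsym[OF pU, of "Z p" "e b"] by (simp add: Efr_def eta_gp)
  next
    case 4 then show ?thesis using unitZ[OF pU] by (simp add: Efr_def)
  qed
qed

lemma sum_split: "(\<Sum>a<NN. F a) = (\<Sum>a<2*n. F a) + F (2*n)"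
  by simp

lemma EE_last: "EE (2*n) = Z p" by (simp add: Efr_def)
lemma EE_low: "a < 2*n \<Longrightarrow> EE a = e a" by (simp add: Efr_def)

lemma sum_EE: "(\<Sum>a<NN. F (EE a)) = (\<Sum>i<2*n. F (e i)) + F (Z p)"
  by (simp add: EE_last EE_low)

lemma inj_EE: "inj_on EE {..<NN}"
proof (rule inj_onI)
  fix a b assume ab: "a \<in> {..<NN}" "b \<in> {..<NN}" "EE a = EE b"
  show "a = b"
  proof (rule ccontr)
    assume "a \<noteq> b"
    then have "gg (EE a) (EE b) = 0" using EE_orth[of a b] ab(1,2) by simp
    moreover have "gg (EE a) (EE a) = 1" using EE_orth[of a a] ab(1,2) by simp
    ultimately show False using ab(3) by (metis zero_neq_one)
  qed
qed

lemma kron: "b < NN \<Longrightarrow> (\<Sum>a<NN. f a * gg (EE a) (EE b)) = f b"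
proof -
  assume b: "b < NN"
  have "(\<Sum>a<NN. f a * gg (EE a) (EE b)) = (\<Sum>a<NN. if a = b then f a else 0)"
    by (rule sum.cong) (use b EE_orth in auto)
  also have "\<dots> = f b" using b by (simp only: sum.delta finite_lessThan) simp
  finally show ?thesis .
qed

lemma span_EE: "v \<in> span (EE ` {..<NN})"
proof -
  let ?B = "EE ` {..<NN}"
  have cardB: "card ?B = NN" using card_image[OF inj_EE] by simp
  have ind: "independent ?B"
    unfolding independent_explicit
  proof (intro conjI allI impI ballI)
    show "finite ?B" by simp
    fix c v assume s: "(\<Sum>v\<in>?B. c v *\<^sub>R v) = 0" and v: "v \<in> ?B"
    then obtain b where b: "b < NN" "v = EE b" by auto
    have "(\<Sum>a<NN. c (EE a) *\<^sub>R EE a) = 0" using s by (simp only: sum.reindex[OF inj_EE] o_def)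
    then have "gg (\<Sum>a<NN. c (EE a) *\<^sub>R EE a) (EE b) = 0" by simp
    then have "(\<Sum>a<NN. c (EE a) * gg (EE a) (EE b)) = 0" by (simp add: gp_sum1)
    moreover have "(\<Sum>a<NN. c (EE a) * gg (EE a) (EE b)) = c (EE b)"
      using b(1) by (rule kron)
    ultimately show "c v = 0" using b by simp
  qed
  have "dim (UNIV :: (real^'m) set) \<le> card ?B" using cardB card by simp
  then have "UNIV \<subseteq> span ?B" using card_ge_dim_independent[OF _ ind] by blast
  then show ?thesis by blast
qed

lemma expand: "v = (\<Sum>a<NN. gg v (EE a) *\<^sub>R EE a)"
proof -
  let ?B = "EE ` {..<NN}"
  obtain c where c: "v = (\<Sum>u\<in>?B. c u *\<^sub>R u)"
    using span_EE[of v] unfolding span_finite[OF finite_imageI[OF finite_lessThan]] by blast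
  then have c': "v = (\<Sum>a<NN. c (EE a) *\<^sub>R EE a)" by (simp only: sum.reindex[OF inj_EE] o_def)
  have "gg v (EE b) = c (EE b)" if "b < NN" for b
  proof -
    have "gg v (EE b) = (\<Sum>a<NN. c (EE a) * gg (EE a) (EE b))"
      by (subst c') (simp add: gp_sum1)
    also have "\<dots> = c (EE b)" using that by (rule kron)
    finally show ?thesis .
  qed
  then show ?thesis using c' by (metis (no_types, lifting) lessThan_iff sum.cong)
qed

lemma pars: "gg u v = (\<Sum>a<NN. gg u (EE a) * gg v (EE a))"
proof -
  have "gg u v = gg (\<Sum>a<NN. gg u (EE a) *\<^sub>R EE a) v" using expand[of u] by simp
  also have "\<dots> = (\<Sum>a<NN. gg u (EE a) * gg (EE a) v)" by (simp add: gp_sum1)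
  also have "\<dots> = (\<Sum>a<NN. gg u (EE a) * gg v (EE a))" using gsym[OF pU] by metis
  finally show ?thesis .
qed

lemma parsh: "gg u v = (\<Sum>k<2*n. gg u (e k) * gg v (e k)) + eta u * eta v"
  using pars[of u v] sum_EE[of "\<lambda>w. gg u w * gg v w"] by (simp add: eta_gp)

lemma expandh: "eta v = 0 \<Longrightarrow> v = (\<Sum>k<2*n. gg v (e k) *\<^sub>R e k)"
  using expand[of v] sum_EE[of "\<lambda>w. gg v w *\<^sub>R w"] by (simp add: eta_gp)

lemma lin_XI1: "linear (\<lambda>x. XI x y)"
  by (rule linearI) (simp_all add: XI_add1 XI_scale1)
lemma lin_XI2: "linear (\<lambda>y. XI x y)"
  by (rule linearI) (simp_all add: XI_add2 XI_scale2)
lemma XI_zero2: "XI x 0 = 0" using XI_scale2[of x 0 0] by simp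
lemma XI_zero1: "XI 0 y = 0" using XI_scale1[of 0 0 y] by simp
lemma XI_sum1: "XI (\<Sum>k\<in>K. c k *\<^sub>R v k) y = (\<Sum>k\<in>K. c k *\<^sub>R XI (v k) y)"
  by (induction K rule: infinite_finite_induct) (simp_all add: XI_add1 XI_scale1 XI_zero1)
lemma XI_sum2: "XI x (\<Sum>k\<in>K. c k *\<^sub>R v k) = (\<Sum>k\<in>K. c k *\<^sub>R XI x (v k))"
  by (induction K rule: infinite_finite_induct) (simp_all add: XI_add2 XI_scale2 XI_zero2)

end

lemma mv_neg[simp]: "(A::real^'n^'m) *v (- v) = - (A *v v)"
  using matrix_vector_mult_scaleR[of A "-1" v] by simp
lemma etaf_scale[simp]: "etaf G Z q (c *\<^sub>R v) = c * etaf G Z q v" by (simp add: etaf_def)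
lemma etaf_add[simp]: "etaf G Z q (u + v) = etaf G Z q u + etaf G Z q v" by (simp add: etaf_def)
lemma etaf_diff[simp]: "etaf G Z q (u - v) = etaf G Z q u - etaf G Z q v" by (simp add: etaf_def)
lemma etaf_minus[simp]: "etaf G Z q (- v) = - etaf G Z q v" by (simp add: etaf_def)
lemma etaf_zero[simp]: "etaf G Z q 0 = 0" by (simp add: etaf_def)

context acm_frame begin

lemma skew0: "gg (XI x y) y = 0"
  using XI_skew[of x y y] gsym[OF pU, of "XI x y" y] by simp
lemma skew': "gg y (XI x z) = - gg (XI x y) z"
  using XI_skew[of x y z] by simp
lemma eta_XIZ: "eta (XI x (Z p)) = 0"
  using skew0[of x "Z p"] by (simp add: eta_gp)
lemma gZ: "gg (Z p) u = eta u" using gsym[OF pU, of "Z p" u] eta_gp by simp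

lemma sum_eta: "(\<Sum>a<NN. eta (EE a) * F a) = F (2*n)"
  using e_eta eta_Z by (simp add: EE_last EE_low)

lemma parsh': "(\<Sum>k<2*n. gg u (e k) * gg v (e k)) = gg u v - eta u * eta v"
  using parsh[of u v] by simp

lemma i7_eq: "i7 G Phi Z n e p = (\<Sum>j<2*n. gg (XI (Z p) (e j)) (XI (e j) (Z p)))"
  unfolding i7_def alpha_def by (simp add: parsh' eta_XIZ)

lemma i17_eq: "i17 G Phi Z n e p = (\<Sum>i<2*n. gg (XI (e i) (e i)) (XI (Z p) (Z p)))"
  unfolding i17_def alpha_def by (simp add: parsh' eta_XIZ)

lemma i8_eq: "i8 G Phi Z n e p = (\<Sum>i<2*n. \<Sum>j<2*n. eta (XI (e i) (e j)) * eta (XI (e j) (e i)))"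
  unfolding i8_def alpha_def eta_gp ..

lemma i10_eq: "i10 G Phi Z n e p = (\<Sum>i<2*n. eta (XI (e i) (e i))) * (\<Sum>j<2*n. eta (XI (e j) (e j)))"
  unfolding i10_def alpha_def eta_gp by (simp add: sum_product)

lemma i14_eq: "i14 G Phi Z n e p = (\<Sum>i<2*n. eta (XI (e i) (Phi p *v e i))) * (\<Sum>j<2*n. eta (XI (e j) (Phi p *v e j)))"
  unfolding i14_def alpha_def eta_gp by (simp add: sum_product)

lemma i12_eq: "i12 G Phi Z n e p = (\<Sum>i<2*n. \<Sum>j<2*n. eta (XI (e i) (e j)) * eta (XI (Phi p *v e j) (Phi p *v e i)))"
  unfolding i12_def alpha_def eta_gp ..

lemma XI_phi_h: "eta y = 0 \<Longrightarrow> XI x (Phi p *v y) = - (Phi p *v XI x y) + eta (XI x (Phi p *v y)) *\<^sub>R Z p"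
proof -
  assume y: "eta y = 0"
  have p2: "Phi p *v (Phi p *v y) = (-1) *\<^sub>R y" using phi2[OF pU, of y] y by simp
  have "XI x (Phi p *v y) = Phi p *v XI x (Phi p *v (Phi p *v y)) + eta (XI x (Phi p *v y)) *\<^sub>R Z p
      + eta (Phi p *v y) *\<^sub>R XI x (Z p)" by (rule XI_perp)
  also have "\<dots> = - (Phi p *v XI x y) + eta (XI x (Phi p *v y)) *\<^sub>R Z p"
    unfolding p2 XI_scale2 using etaphi[OF pU, of y] by (simp add: matrix_vector_mult_scaleR)
  finally show ?thesis .
qed

lemma eta_sum: "eta (\<Sum>k\<in>K. f k) = (\<Sum>k\<in>K. eta (f k))"
  unfolding eta_gp by (rule gp_sum1)

lemma eta_phi_e: "i < 2*n \<Longrightarrow> eta (Phi p *v e i) = 0" using etaphi[OF pU] .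

lemma i12_alt: "(\<Sum>i<2*n. \<Sum>j<2*n. eta (XI (e i) (Phi p *v e j)) * eta (XI (e j) (Phi p *v e i)))
   = - i12 G Phi Z n e p"
proof -
  define B where "B x y = eta (XI x y)" for x y
  have exp: "Phi p *v e j = (\<Sum>l<2*n. gg (Phi p *v e j) (e l) *\<^sub>R e l)" for j
    using expandh[OF etaphi[OF pU, of "e j"]] .
  have B2: "B x (Phi p *v e j) = (\<Sum>l<2*n. gg (Phi p *v e j) (e l) * B x (e l))" for x j
    unfolding B_def by (subst exp) (simp add: XI_sum2 eta_sum)
  have B1: "(\<Sum>j<2*n. gg (Phi p *v e l) (e j) * B (e j) y) = B (Phi p *v e l) y" for l y
    unfolding B_def by (subst (2) exp) (simp add: XI_sum1 eta_sum)
  have sk: "gg (Phi p *v e j) (e l) = - gg (Phi p *v e l) (e j)" for j l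
    using phiskew[OF pU, of "e j" "e l"] gsym[OF pU, of "e j" "Phi p *v e l"] by simp
  have s1: "B (e i) (Phi p *v e j) * B (e j) (Phi p *v e i) =
      (\<Sum>l<2*n. gg (Phi p *v e j) (e l) * B (e i) (e l) * B (e j) (Phi p *v e i))" for i j
    by (simp only: B2[of "e i" j] sum_distrib_right)
  have s3: "(\<Sum>j<2*n. gg (Phi p *v e j) (e l) * B (e i) (e l) * B (e j) (Phi p *v e i))
     = - (B (e i) (e l) * B (Phi p *v e l) (Phi p *v e i))" for i l
  proof -
    have "(\<Sum>j<2*n. gg (Phi p *v e j) (e l) * B (e i) (e l) * B (e j) (Phi p *v e i))
        = (\<Sum>j<2*n. - (B (e i) (e l) * (gg (Phi p *v e l) (e j) * B (e j) (Phi p *v e i))))"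
    proof (rule sum.cong[OF refl])
      fix j show "gg (Phi p *v e j) (e l) * B (e i) (e l) * B (e j) (Phi p *v e i)
          = - (B (e i) (e l) * (gg (Phi p *v e l) (e j) * B (e j) (Phi p *v e i)))"
        by (subst sk) simp
    qed
    also have "\<dots> = - (B (e i) (e l) * (\<Sum>j<2*n. gg (Phi p *v e l) (e j) * B (e j) (Phi p *v e i)))"
      by (simp only: sum_negf sum_distrib_left)
    also have "\<dots> = - (B (e i) (e l) * B (Phi p *v e l) (Phi p *v e i))" by (simp only: B1)
    finally show ?thesis .
  qed
  have "(\<Sum>i<2*n. \<Sum>j<2*n. B (e i) (Phi p *v e j) * B (e j) (Phi p *v e i))
      = (\<Sum>i<2*n. \<Sum>j<2*n. \<Sum>l<2*n. gg (Phi p *v e j) (e l) * B (e i) (e l) * B (e j) (Phi p *v e i))"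
    by (simp only: s1)
  also have "\<dots> = (\<Sum>i<2*n. \<Sum>l<2*n. \<Sum>j<2*n. gg (Phi p *v e j) (e l) * B (e i) (e l) * B (e j) (Phi p *v e i))"
    by (rule sum.cong[OF refl]) (rule sum.swap)
  also have "\<dots> = (\<Sum>i<2*n. \<Sum>l<2*n. - (B (e i) (e l) * B (Phi p *v e l) (Phi p *v e i)))"
    by (simp only: s3)
  also have "\<dots> = - (\<Sum>i<2*n. \<Sum>l<2*n. B (e i) (e l) * B (Phi p *v e l) (Phi p *v e i))"
    by (simp only: sum_negf)
  finally show ?thesis unfolding i12_eq B_def .
qed

end

declare sum.lessThan_Suc [simp del] lessThan_Suc [simp del]

lemma sum4_half: "(\<Sum>i\<in>I. \<Sum>j\<in>J. (k::real) * (f i j - g i j + h i j + l i j))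
   = k * ((\<Sum>i\<in>I. \<Sum>j\<in>J. f i j) - (\<Sum>i\<in>I. \<Sum>j\<in>J. g i j) + (\<Sum>i\<in>I. \<Sum>j\<in>J. h i j) + (\<Sum>i\<in>I. \<Sum>j\<in>J. l i j))"
proof -
  have "(\<Sum>i\<in>I. \<Sum>j\<in>J. k * (f i j - g i j + h i j + l i j)) = k * (\<Sum>i\<in>I. \<Sum>j\<in>J. (f i j - g i j + h i j + l i j))"
    by (simp only: sum_distrib_left)
  also have "(\<Sum>i\<in>I. \<Sum>j\<in>J. (f i j - g i j + h i j + l i j)) = (\<Sum>i\<in>I. \<Sum>j\<in>J. f i j) - (\<Sum>i\<in>I. \<Sum>j\<in>J. g i j) + (\<Sum>i\<in>I. \<Sum>j\<in>J. h i j) + (\<Sum>i\<in>I. \<Sum>j\<in>J. l i j)"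
    by (simp only: sum.distrib sum_subtractf)
  finally show ?thesis .
qed

context acm_frame begin

lemma gg_sum_sum: "gg (\<Sum>a\<in>A. f a) (\<Sum>b\<in>B. h b) = (\<Sum>a\<in>A. \<Sum>b\<in>B. gg (f a) (h b))"
  by (unfold gp_sum1, unfold gp_sum2) (rule refl)

lemma perp_gg: "gg (perp G Phi Z p C v) u = (1/2) * (gg (C v) u - gg (C (Phi p *v v)) (Phi p *v u)
    + eta (C v) * eta u + eta v * gg (C (Z p)) u)"
  unfolding perp_def using phiskew[OF pU, of "C (Phi p *v v)" u] gZ[of u] by simp

lemma comm_gg: "gg (commut (XI x) (XI y) v) u = - gg (XI x u) (XI y v) + gg (XI x v) (XI y u)"
  unfolding commut_def using gsym[OF pU, of "XI x u" "XI y v"] by (simp add: XI_skew[of x "XI y v" u] XI_skew[of y "XI x v" u])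

lemma comm_eta: "eta (commut (XI x) (XI y) v) = - gg (XI x (Z p)) (XI y v) + gg (XI x v) (XI y (Z p))"
  using comm_gg[of x y v "Z p"] by (simp add: eta_gp)

lemma sum_eta2: "(\<Sum>a<NN. \<Sum>b<NN. F a b * eta (EE a)) = (\<Sum>b<NN. F (2*n) b)"
proof -
  have "(\<Sum>a<NN. \<Sum>b<NN. F a b * eta (EE a)) = (\<Sum>a<NN. eta (EE a) * (\<Sum>b<NN. F a b))"
    by (simp add: sum_distrib_left mult.commute)
  also have "\<dots> = (\<Sum>b<NN. F (2*n) b)" by (rule sum_eta)
  finally show ?thesis .
qed

lemma sum_eta3: "(\<Sum>a<NN. \<Sum>b<NN. eta (EE b) * F a b) = (\<Sum>a<NN. F a (2*n))"
  by (simp only: sum_eta)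

lemma scal_alt_split:
  defines "V \<equiv> \<Sum>a<NN. XI (EE a) (EE a)"
    and "W \<equiv> \<Sum>a<NN. XI (EE a) (Phi p *v EE a)"
    and "X1 \<equiv> \<Sum>a<NN. \<Sum>b<NN. gg (XI (EE a) (EE b)) (XI (EE b) (EE a))"
    and "X2 \<equiv> \<Sum>a<NN. \<Sum>b<NN. gg (XI (EE a) (Phi p *v EE b)) (XI (EE b) (Phi p *v EE a))"
    and "Y \<equiv> \<Sum>b<NN. gg (XI (Z p) (EE b)) (XI (EE b) (Z p))"
    and "R \<equiv> XI (Z p) (Z p)"
  shows "scal_alt_perp G Phi Z n e p = (1/2) * (- gg V V + X1 + gg W W - X2) + (1/2) * ((- gg R V + Y) + (- gg V R + Y))"
proof -
  have T1: "(\<Sum>a<NN. \<Sum>b<NN. gg (commut (XI (EE a)) (XI (EE b)) (EE b)) (EE a)) = - gg V V + X1"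
    unfolding V_def X1_def comm_gg gg_sum_sum
    by (simp add: sum.distrib sum_negf sum_subtractf)
  have T2: "(\<Sum>a<NN. \<Sum>b<NN. gg (commut (XI (EE a)) (XI (EE b)) (Phi p *v EE b)) (Phi p *v EE a)) = - gg W W + X2"
    unfolding W_def X2_def comm_gg gg_sum_sum
    by (simp add: sum.distrib sum_negf sum_subtractf)
  have T3: "(\<Sum>a<NN. \<Sum>b<NN. eta (commut (XI (EE a)) (XI (EE b)) (EE b)) * eta (EE a)) = - gg R V + Y"
  proof -
    have "(\<Sum>a<NN. \<Sum>b<NN. eta (commut (XI (EE a)) (XI (EE b)) (EE b)) * eta (EE a))
       = (\<Sum>b<NN. eta (commut (XI (EE (2*n))) (XI (EE b)) (EE b)))" by (rule sum_eta2)
    also have "\<dots> = (\<Sum>b<NN. - gg R (XI (EE b) (EE b)) + gg (XI (Z p) (EE b)) (XI (EE b) (Z p)))"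
      unfolding comm_eta EE_last R_def ..
    also have "\<dots> = - gg R V + Y" unfolding V_def Y_def by (simp add: sum.distrib gp_sum2 sum_negf sum_subtractf)
    finally show ?thesis .
  qed
  have T4: "(\<Sum>a<NN. \<Sum>b<NN. eta (EE b) * gg (commut (XI (EE a)) (XI (EE b)) (Z p)) (EE a)) = - gg V R + Y"
  proof -
    have "(\<Sum>a<NN. \<Sum>b<NN. eta (EE b) * gg (commut (XI (EE a)) (XI (EE b)) (Z p)) (EE a))
       = (\<Sum>a<NN. gg (commut (XI (EE a)) (XI (EE (2*n))) (Z p)) (EE a))" by (rule sum_eta3)
    also have "\<dots> = (\<Sum>a<NN. - gg (XI (EE a) (EE a)) (XI (Z p) (Z p)) + gg (XI (EE a) (Z p)) (XI (Z p) (EE a)))"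
      unfolding comm_gg EE_last ..
    also have "\<dots> = (\<Sum>a<NN. - gg (XI (EE a) (EE a)) R + gg (XI (Z p) (EE a)) (XI (EE a) (Z p)))"
      unfolding R_def using gsym[OF pU, of "XI (EE _) (Z p)"] by simp
    also have "\<dots> = - gg V R + Y" unfolding V_def Y_def by (simp add: sum.distrib gp_sum1 sum_negf sum_subtractf)
    finally show ?thesis .
  qed
  have "scal_alt_perp G Phi Z n e p = (\<Sum>a<NN. \<Sum>b<NN. (1/2) *
      (gg (commut (XI (EE a)) (XI (EE b)) (EE b)) (EE a)
       - gg (commut (XI (EE a)) (XI (EE b)) (Phi p *v EE b)) (Phi p *v EE a)
       + eta (commut (XI (EE a)) (XI (EE b)) (EE b)) * eta (EE a)
       + eta (EE b) * gg (commut (XI (EE a)) (XI (EE b)) (Z p)) (EE a)))"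
    unfolding scal_alt_perp_def perp_gg ..
  also have "\<dots> = (1/2) * ((- gg V V + X1) - (- gg W W + X2) + (- gg R V + Y) + (- gg V R + Y))"
    unfolding sum4_half T1 T2 T3 T4 ..
  finally show ?thesis by (simp add: field_simps)
qed

end

context acm_frame begin

lemma sum_EE2: "(\<Sum>a<NN. \<Sum>b<NN. H (EE a) (EE b)) = (\<Sum>i<2*n. \<Sum>j<2*n. H (e i) (e j))
   + (\<Sum>i<2*n. H (e i) (Z p)) + (\<Sum>j<2*n. H (Z p) (e j)) + H (Z p) (Z p)"
proof -
  have in1: "(\<Sum>b<NN. H x (EE b)) = (\<Sum>j<2*n. H x (e j)) + H x (Z p)" for x
    using sum_EE[of "H x"] .
  have "(\<Sum>a<NN. \<Sum>b<NN. H (EE a) (EE b)) = (\<Sum>a<NN. (\<Sum>j<2*n. H (EE a) (e j)) + H (EE a) (Z p))"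
    by (simp only: in1)
  also have "\<dots> = (\<Sum>i<2*n. (\<Sum>j<2*n. H (e i) (e j)) + H (e i) (Z p)) + ((\<Sum>j<2*n. H (Z p) (e j)) + H (Z p) (Z p))"
    using sum_EE[of "\<lambda>x. (\<Sum>j<2*n. H x (e j)) + H x (Z p)"] .
  finally show ?thesis by (simp add: sum.distrib add.assoc)
qed

lemma mv_sum: "(A::real^'n^'m) *v (\<Sum>i\<in>I. f i) = (\<Sum>i\<in>I. A *v f i)"
  by (induction I rule: infinite_finite_induct) (simp_all add: matrix_vector_right_distrib)

lemma hlem:
  assumes "eta y1 = 0" "eta y2 = 0"
  shows "gg (XI x1 (Phi p *v y1)) (XI x2 (Phi p *v y2)) = gg (XI x1 y1) (XI x2 y2)
     - eta (XI x1 y1) * eta (XI x2 y2) + eta (XI x1 (Phi p *v y1)) * eta (XI x2 (Phi p *v y2))"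
proof -
  let ?u = "XI x1 y1" and ?v = "XI x2 y2" and ?s = "eta (XI x1 (Phi p *v y1))" and ?t = "eta (XI x2 (Phi p *v y2))"
  have a: "XI x1 (Phi p *v y1) = - (Phi p *v ?u) + ?s *\<^sub>R Z p" by (rule XI_phi_h[OF assms(1)])
  have b: "XI x2 (Phi p *v y2) = - (Phi p *v ?v) + ?t *\<^sub>R Z p" by (rule XI_phi_h[OF assms(2)])
  have c1: "gg (Phi p *v ?u) (Z p) = 0" using etaphi[OF pU, of ?u] by (simp add: eta_gp)
  have c2: "gg (Z p) (Phi p *v ?v) = 0" using etaphi[OF pU, of ?v] gZ by simp
  have c3: "gg (Phi p *v ?u) (Phi p *v ?v) = gg ?u ?v - eta ?u * eta ?v" using phimet[OF pU] .
  have "gg (XI x1 (Phi p *v y1)) (XI x2 (Phi p *v y2)) = gg (- (Phi p *v ?u) + ?s *\<^sub>R Z p) (- (Phi p *v ?v) + ?t *\<^sub>R Z p)"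
    using a b by simp
  also have "\<dots> = gg (Phi p *v ?u) (Phi p *v ?v) - ?t * gg (Phi p *v ?u) (Z p) - ?s * gg (Z p) (Phi p *v ?v)
      + ?s * ?t * gg (Z p) (Z p)" by (simp add: algebra_simps)
  also have "\<dots> = gg ?u ?v - eta ?u * eta ?v + ?s * ?t" using c1 c2 c3 unitZ[OF pU] by simp
  finally show ?thesis .
qed

theorem part1: "scal_alt_perp G Phi Z n e p =
    (1/2) * (i8 G Phi Z n e p - i10 G Phi Z n e p + i12 G Phi Z n e p + i14 G Phi Z n e p)
    + 2 * (i7 G Phi Z n e p - i17 G Phi Z n e p)"
proof -
  define V where "V = (\<Sum>a<NN. XI (EE a) (EE a))"
  define W where "W = (\<Sum>a<NN. XI (EE a) (Phi p *v EE a))"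
  define X1 where "X1 = (\<Sum>a<NN. \<Sum>b<NN. gg (XI (EE a) (EE b)) (XI (EE b) (EE a)))"
  define X2 where "X2 = (\<Sum>a<NN. \<Sum>b<NN. gg (XI (EE a) (Phi p *v EE b)) (XI (EE b) (Phi p *v EE a)))"
  define Y where "Y = (\<Sum>b<NN. gg (XI (Z p) (EE b)) (XI (EE b) (Z p)))"
  define R where "R = XI (Z p) (Z p)"
  define V' where "V' = (\<Sum>i<2*n. XI (e i) (e i))"
  define Q where "Q = (\<Sum>i<2*n. \<Sum>j<2*n. gg (XI (e i) (e j)) (XI (e j) (e i)))"
  define i7' i8' i10' i12' i14' i17' where "i7' = i7 G Phi Z n e p" and "i8' = i8 G Phi Z n e p"
    and "i10' = i10 G Phi Z n e p" and "i12' = i12 G Phi Z n e p" and "i14' = i14 G Phi Z n e p"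
    and "i17' = i17 G Phi Z n e p"
  have split: "scal_alt_perp G Phi Z n e p = (1/2) * (- gg V V + X1 + gg W W - X2) + (1/2) * ((- gg R V + Y) + (- gg V R + Y))"
    unfolding V_def W_def X1_def X2_def Y_def R_def by (rule scal_alt_split)
  have F1: "Y = i7' + gg R R"
    unfolding Y_def i7'_def i7_eq R_def using sum_EE[of "\<lambda>w. gg (XI (Z p) w) (XI w (Z p))"] by simp
  have F2: "V = V' + R" unfolding V_def V'_def R_def using sum_EE[of "\<lambda>w. XI w w"] by simp
  have F3: "gg V' R = i17'" unfolding V'_def i17'_def i17_eq R_def by (simp add: gp_sum1)
  have F3': "gg R V' = i17'" using F3 gsym[OF pU, of R V'] by simp
  have F4: "gg V V = gg V' V' + 2 * i17' + gg R R" unfolding F2 using F3 F3' by simp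
  have F4a: "gg V R = i17' + gg R R" unfolding F2 using F3 by simp
  have F4b: "gg R V = i17' + gg R R" unfolding F2 using F3' by simp
  have F5: "W = (\<Sum>i<2*n. XI (e i) (Phi p *v e i))"
    unfolding W_def using sum_EE[of "\<lambda>w. XI w (Phi p *v w)"] phiZ[OF pU] XI_zero2 by simp
  have etaW: "eta W = (\<Sum>i<2*n. eta (XI (e i) (Phi p *v e i)))" unfolding F5 by (rule eta_sum)
  have etaV': "eta V' = (\<Sum>i<2*n. eta (XI (e i) (e i)))" unfolding V'_def by (rule eta_sum)
  have F6: "W = - (Phi p *v V') + eta W *\<^sub>R Z p"
  proof -
    have "W = (\<Sum>i<2*n. - (Phi p *v XI (e i) (e i)) + eta (XI (e i) (Phi p *v e i)) *\<^sub>R Z p)"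
      unfolding F5 by (rule sum.cong[OF refl]) (rule XI_phi_h[OF e_eta], simp)
    also have "\<dots> = - (Phi p *v V') + eta W *\<^sub>R Z p"
      unfolding V'_def etaW by (simp add: sum.distrib sum_negf mv_sum scaleR_sum_left sum_subtractf)
    finally show ?thesis .
  qed
  have F7: "gg W W = gg V' V' - eta V' * eta V' + eta W * eta W"
  proof -
    have c1: "gg (Phi p *v V') (Z p) = 0" using etaphi[OF pU, of V'] by (simp add: eta_gp)
    have c2: "gg (Z p) (Phi p *v V') = 0" using etaphi[OF pU, of V'] gZ by simp
    have c3: "gg (Phi p *v V') (Phi p *v V') = gg V' V' - eta V' * eta V'" using phimet[OF pU] .
    have "gg W W = gg (- (Phi p *v V') + eta W *\<^sub>R Z p) (- (Phi p *v V') + eta W *\<^sub>R Z p)"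
      using F6 by simp
    also have "\<dots> = gg (Phi p *v V') (Phi p *v V') - eta W * gg (Phi p *v V') (Z p) - eta W * gg (Z p) (Phi p *v V')
      + eta W * eta W * gg (Z p) (Z p)" by (simp add: algebra_simps)
    also have "\<dots> = gg V' V' - eta V' * eta V' + eta W * eta W" using c1 c2 c3 unitZ[OF pU] by simp
    finally show ?thesis .
  qed
  have F8a: "i10' = eta V' * eta V'" unfolding i10'_def i10_eq etaV' ..
  have F8b: "i14' = eta W * eta W" unfolding i14'_def i14_eq etaW ..
  have F9: "X1 = Q + 2 * i7' + gg R R"
  proof -
    have "X1 = Q + (\<Sum>i<2*n. gg (XI (e i) (Z p)) (XI (Z p) (e i))) + (\<Sum>j<2*n. gg (XI (Z p) (e j)) (XI (e j) (Z p))) + gg R R"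
      unfolding X1_def Q_def R_def by (rule sum_EE2)
    moreover have "(\<Sum>i<2*n. gg (XI (e i) (Z p)) (XI (Z p) (e i))) = i7'"
      unfolding i7'_def i7_eq using gsym[OF pU] by simp
    moreover have "(\<Sum>j<2*n. gg (XI (Z p) (e j)) (XI (e j) (Z p))) = i7'"
      unfolding i7'_def i7_eq ..
    ultimately show ?thesis by simp
  qed
  have F10: "X2 = Q - i8' - i12'"
  proof -
    have "X2 = (\<Sum>i<2*n. \<Sum>j<2*n. gg (XI (e i) (Phi p *v e j)) (XI (e j) (Phi p *v e i)))"
      unfolding X2_def using sum_EE2[of "\<lambda>x y. gg (XI x (Phi p *v y)) (XI y (Phi p *v x))"] phiZ[OF pU] XI_zero2
      by simp
    also have "\<dots> = (\<Sum>i<2*n. \<Sum>j<2*n. gg (XI (e i) (e j)) (XI (e j) (e i))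
        - eta (XI (e i) (e j)) * eta (XI (e j) (e i)) + eta (XI (e i) (Phi p *v e j)) * eta (XI (e j) (Phi p *v e i)))"
      by (intro sum.cong refl hlem e_eta) simp_all
    also have "\<dots> = Q - i8' + (\<Sum>i<2*n. \<Sum>j<2*n. eta (XI (e i) (Phi p *v e j)) * eta (XI (e j) (Phi p *v e i)))"
      unfolding Q_def i8'_def i8_eq by (simp add: sum.distrib sum_subtractf)
    also have "\<dots> = Q - i8' - i12'" unfolding i12'_def i12_alt by simp
    finally show ?thesis .
  qed
  show ?thesis
    unfolding i7'_def[symmetric] i8'_def[symmetric] i10'_def[symmetric] i12'_def[symmetric]
      i14'_def[symmetric] i17'_def[symmetric] split
    using F1 F4 F4a F4b F7 F8a F8b F9 F10 by (simp add: algebra_simps)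
qed

end

lemma diff_nth: "f differentiable (at p) \<Longrightarrow> (\<lambda>q. f q $ k) differentiable (at p)"
  by (rule differentiable_compose[OF bounded_linear_imp_differentiable[OF bounded_linear_vec_nth]])

lemma diff_eucl:
  fixes f :: "'a::real_normed_vector \<Rightarrow> 'b::euclidean_space"
  assumes "\<And>b. b \<in> Basis \<Longrightarrow> (\<lambda>q. f q \<bullet> b) differentiable (at p)"
  shows "f differentiable (at p)"
proof -
  have eq: "f = (\<lambda>q. \<Sum>b\<in>Basis. (f q \<bullet> b) *\<^sub>R b)" by (simp add: euclidean_representation)
  have "(\<lambda>q. \<Sum>b\<in>Basis. (f q \<bullet> b) *\<^sub>R b) differentiable (at p)"
    using assms by (intro differentiable_sum) auto
  then show ?thesis by (subst eq)
qed

lemma diff_vec: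
  fixes f :: "'a::real_normed_vector \<Rightarrow> real^'n"
  assumes "\<And>k. (\<lambda>q. f q $ k) differentiable (at p)"
  shows "f differentiable (at p)"
proof (rule diff_eucl)
  fix b :: "real^'n" assume "b \<in> Basis"
  then obtain k where "b = axis k 1" unfolding Basis_vec_def by auto
  then show "(\<lambda>q. f q \<bullet> b) differentiable (at p)" using assms[of k] by (simp add: inner_axis)
qed

lemma diff_mat:
  fixes f :: "'a::real_normed_vector \<Rightarrow> real^'n^'m"
  assumes "\<And>i j. (\<lambda>q. f q $ i $ j) differentiable (at p)"
  shows "f differentiable (at p)"
proof (rule diff_eucl)
  fix b :: "real^'n^'m" assume "b \<in> Basis"
  then obtain i u where "b = axis i u" "u \<in> (Basis :: (real^'n) set)" unfolding Basis_vec_def by auto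
  moreover then obtain j where "u = axis j 1" unfolding Basis_vec_def by auto
  ultimately show "(\<lambda>q. f q \<bullet> b) differentiable (at p)" using assms[of i j] by (simp add: inner_axis)
qed

lemma diff_prod:
  fixes f :: "'i \<Rightarrow> 'a::real_normed_vector \<Rightarrow> real"
  shows "finite I \<Longrightarrow> (\<And>i. i \<in> I \<Longrightarrow> f i differentiable (at p)) \<Longrightarrow> (\<lambda>q. \<Prod>i\<in>I. f i q) differentiable (at p)"
proof (induction I rule: finite_induct)
  case empty then show ?case by simp
next
  case (insert a F)
  then show ?case by (simp add: differentiable_mult)
qed

lemma diff_det:
  fixes M :: "'a::real_normed_vector \<Rightarrow> real^'n^'n"
  assumes "M differentiable (at p)"
  shows "(\<lambda>q. det (M q)) differentiable (at p)"
proof -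
  have e: "(\<lambda>q. M q $ i $ j) differentiable (at p)" for i j
    using diff_nth[OF diff_nth[OF assms]] .
  show ?thesis unfolding det_def
    by (intro differentiable_sum ballI differentiable_mult diff_prod finite_UNIV e) auto
qed

lemma diff_mv_const: "(M :: 'a::real_normed_vector \<Rightarrow> real^'n^'m) differentiable (at p) \<Longrightarrow> (\<lambda>q. M q *v v) differentiable (at p)"
  using has_derivative_mv[of M _ p "\<lambda>q. v" "\<lambda>h. 0"] unfolding differentiable_def by auto

lemma diff_inner_const: "(f :: 'a::real_normed_vector \<Rightarrow> real^'n) differentiable (at p) \<Longrightarrow> (\<lambda>q. y \<bullet> f q) differentiable (at p)"
  by (simp add: differentiable_inner)

context acm_pt begin

definition KK where "KK q x y = (\<chi> l. (1/2) * ( y \<bullet> (frechet_derivative G (at q) x *v axis l 1)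
              + x \<bullet> (frechet_derivative G (at q) y *v axis l 1)
              - x \<bullet> (frechet_derivative G (at q) (axis l 1) *v y)))"

lemma Gam_KK: "Gam G q x y = matrix_inv (G q) *v KK q x y"
  unfolding Gam_def KK_def ..

lemma HD_diff: "(\<lambda>q. frechet_derivative G (at q) v) differentiable (at p)"
  using smooth_diff[OF smooth_on_D[OF sG] opU pU] .

lemma KK_diff: "(\<lambda>q. KK q x y) differentiable (at p)"
proof (rule diff_vec)
  fix k
  have eq: "(\<lambda>q. KK q x y $ k) = (\<lambda>q. (1/2) * ( y \<bullet> (frechet_derivative G (at q) x *v axis k 1)
              + x \<bullet> (frechet_derivative G (at q) y *v axis k 1)
              - x \<bullet> (frechet_derivative G (at q) (axis k 1) *v y)))" by (simp add: KK_def)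
  show "(\<lambda>q. KK q x y $ k) differentiable (at p)" unfolding eq
    by (intro differentiable_mult differentiable_diff differentiable_add
      differentiable_const diff_inner_const diff_mv_const HD_diff)
qed

lemma Gam_cramer: "q \<in> U \<Longrightarrow> Gam G q x y =
   (\<chi> k. det (\<chi> i j. if j = k then KK q x y $ i else G q $ i $ j) / det (G q))"
proof -
  assume q: "q \<in> U"
  have d: "det (G q) \<noteq> 0" using invG[OF q] invertible_det_nz by blast
  have "G q *v Gam G q x y = KK q x y"
    unfolding Gam_KK using inv_props[OF invG[OF q]] by (simp add: matrix_vector_mul_assoc)
  then show ?thesis using cramer[OF d] by blast
qed

lemma Gam_diff: "(\<lambda>q. Gam G q x y) differentiable (at p)"
proof -
  define F where "F q = (\<chi> k. det (\<chi> i j. if j = k then KK q x y $ i else G q $ i $ j) / det (G q))" for q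
  have dG: "G differentiable (at p)" using smooth_diff[OF sG opU pU] .
  have dp: "det (G p) \<noteq> 0" using invG[OF pU] invertible_det_nz by blast
  have "F differentiable (at p)"
    unfolding F_def
  proof (intro diff_vec)
    fix k
    have M: "(\<lambda>q. (\<chi> i j. if j = k then KK q x y $ i else G q $ i $ j) :: real^'m^'m) differentiable (at p)"
    proof (intro diff_mat)
      fix i j
      show "(\<lambda>q. ((\<chi> i j. if j = k then KK q x y $ i else G q $ i $ j) :: real^'m^'m) $ i $ j) differentiable (at p)"
        using diff_nth[OF KK_diff, where k=i] diff_nth[OF diff_nth[OF dG, where k=i], where k=j] by (cases "j = k") auto
    qed
    have eq: "(\<lambda>q. (\<chi> k. det (\<chi> i j. if j = k then KK q x y $ i else G q $ i $ j) / det (G q)) $ k)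
        = (\<lambda>q. det (\<chi> i j. if j = k then KK q x y $ i else G q $ i $ j) / det (G q))" by simp
    show "(\<lambda>q. (\<chi> k. det (\<chi> i j. if j = k then KK q x y $ i else G q $ i $ j) / det (G q)) $ k) differentiable (at p)"
      unfolding eq by (rule differentiable_divide[OF diff_det[OF M] diff_det[OF dG] dp])
  qed
  then obtain F' where "(F has_derivative F') (at p)" unfolding differentiable_def by blast
  then have "((\<lambda>q. Gam G q x y) has_derivative F') (at p)"
    by (rule has_derivative_transform_within_open[OF _ opU pU]) (simp add: F_def Gam_cramer)
  then show ?thesis unfolding differentiable_def by blast
qed

end

context acm_pt begin

abbreviation "D2 a x \<equiv> frechet_derivative (\<lambda>q. frechet_derivative G (at q) a) (at p) x"
abbreviation "DGam a b x \<equiv> frechet_derivative (\<lambda>q. Gam G q a b) (at p) x"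

lemma hGam: "((\<lambda>q. Gam G q a b) has_derivative DGam a b) (at p)"
  using Gam_diff frechet_derivative_works by blast

lemma hHD: "((\<lambda>q. frechet_derivative G (at q) a) has_derivative D2 a) (at p)"
  using HD_diff frechet_derivative_works by blast

lemma D2_sym: "D2 a x = D2 x a"
  by (rule second_deriv_sym[OF opU pU smooth_diff[OF sG opU] HD_diff HD_diff])

lemma dcompat: "gg (DGam a b x) c + gg b (DGam a c x) =
    b \<bullet> (D2 a x *v c) - Gam G p a b \<bullet> (DG x *v c) - b \<bullet> (DG x *v Gam G p a c)"
proof -
  have d1: "((\<lambda>q. gp G q (Gam G q a b) c) has_derivative
     (\<lambda>h. DGam a b h \<bullet> (G p *v c) + Gam G p a b \<bullet> (DG h *v c) + Gam G p a b \<bullet> (G p *v 0))) (at p)"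
    by (rule has_derivative_gp[OF hG hGam hconst])
  have d2: "((\<lambda>q. gp G q b (Gam G q a c)) has_derivative
     (\<lambda>h. 0 \<bullet> (G p *v Gam G p a c) + b \<bullet> (DG h *v Gam G p a c) + b \<bullet> (G p *v DGam a c h))) (at p)"
    by (rule has_derivative_gp[OF hG hconst hGam])
  have dL: "((\<lambda>q. gp G q (Gam G q a b) c + gp G q b (Gam G q a c)) has_derivative
     (\<lambda>h. (DGam a b h \<bullet> (G p *v c) + Gam G p a b \<bullet> (DG h *v c) + Gam G p a b \<bullet> (G p *v 0))
        + (0 \<bullet> (G p *v Gam G p a c) + b \<bullet> (DG h *v Gam G p a c) + b \<bullet> (G p *v DGam a c h)))) (at p)"
    by (rule has_derivative_add[OF d1 d2])
  have dM: "((\<lambda>q. frechet_derivative G (at q) a *v c) has_derivative (\<lambda>h. DG a *v 0 + D2 a h *v c)) (at p)"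
    by (rule has_derivative_mv[OF hHD hconst])
  have dR: "((\<lambda>q. b \<bullet> (frechet_derivative G (at q) a *v c)) has_derivative
      (\<lambda>h. b \<bullet> (DG a *v 0 + D2 a h *v c) + 0 \<bullet> (DG a *v c))) (at p)"
    by (rule has_derivative_inner[OF hconst dM])
  have eqf: "(\<lambda>h. (DGam a b h \<bullet> (G p *v c) + Gam G p a b \<bullet> (DG h *v c) + Gam G p a b \<bullet> (G p *v 0))
        + (0 \<bullet> (G p *v Gam G p a c) + b \<bullet> (DG h *v Gam G p a c) + b \<bullet> (G p *v DGam a c h)))
      = (\<lambda>h. b \<bullet> (DG a *v 0 + D2 a h *v c) + 0 \<bullet> (DG a *v c))"
    by (rule deriv_eq_on_open[OF dL dR opU pU]) (use compatU in auto)
  have "DGam a b x \<bullet> (G p *v c) + Gam G p a b \<bullet> (DG x *v c) + b \<bullet> (DG x *v Gam G p a c) + b \<bullet> (G p *v DGam a c x)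
     = b \<bullet> (D2 a x *v c)"
    using fun_cong[OF eqf, of x] by simp
  then show ?thesis unfolding gp_def by simp
qed

lemma Rm_skew: "gg (Rm G p x y z) w + gg (Rm G p x y w) z = 0"
proof -
  have E1: "gg (DGam y z x) w + gg z (DGam y w x) =
    z \<bullet> (D2 y x *v w) - Gam G p y z \<bullet> (DG x *v w) - z \<bullet> (DG x *v Gam G p y w)" by (rule dcompat)
  have E2: "gg (DGam x z y) w + gg z (DGam x w y) =
    z \<bullet> (D2 x y *v w) - Gam G p x z \<bullet> (DG y *v w) - z \<bullet> (DG y *v Gam G p x w)" by (rule dcompat)
  have S: "D2 y x = D2 x y" by (rule D2_sym)
  have E1': "gg (DGam y z x) w + gg z (DGam y w x) =
    z \<bullet> (D2 x y *v w) - Gam G p y z \<bullet> (DG x *v w) - z \<bullet> (DG x *v Gam G p y w)" using E1 unfolding S .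
  have C1: "gg (Gam G p x (Gam G p y z)) w = Gam G p y z \<bullet> (DG x *v w) - gg (Gam G p y z) (Gam G p x w)"
    using compatU[OF pU, of x "Gam G p y z" w] by simp
  have C2: "gg (Gam G p x (Gam G p y w)) z = Gam G p y w \<bullet> (DG x *v z) - gg (Gam G p y w) (Gam G p x z)"
    using compatU[OF pU, of x "Gam G p y w" z] by simp
  have C3: "gg (Gam G p y (Gam G p x z)) w = Gam G p x z \<bullet> (DG y *v w) - gg (Gam G p x z) (Gam G p y w)"
    using compatU[OF pU, of y "Gam G p x z" w] by simp
  have C4: "gg (Gam G p y (Gam G p x w)) z = Gam G p x w \<bullet> (DG y *v z) - gg (Gam G p x w) (Gam G p y z)"
    using compatU[OF pU, of y "Gam G p x w" z] by simp
  have s1: "gg (Gam G p y z) (Gam G p x w) = gg (Gam G p x w) (Gam G p y z)" by (rule gsym[OF pU])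
  have s2: "gg (Gam G p y w) (Gam G p x z) = gg (Gam G p x z) (Gam G p y w)" by (rule gsym[OF pU])
  have s3: "gg (DGam y w x) z = gg z (DGam y w x)" by (rule gsym[OF pU])
  have s4: "gg (DGam x w y) z = gg z (DGam x w y)" by (rule gsym[OF pU])
  have s5: "z \<bullet> (DG x *v Gam G p y w) = Gam G p y w \<bullet> (DG x *v z)" by (rule dot_mv_sym[OF dsymG[OF pU]])
  have s6: "z \<bullet> (DG y *v Gam G p x w) = Gam G p x w \<bullet> (DG y *v z)" by (rule dot_mv_sym[OF dsymG[OF pU]])
  show ?thesis unfolding Rm_def
    by (simp only: gp_add1 gp_diff1) (use E1' E2 C1 C2 C3 C4 s1 s2 s3 s4 s5 s6 in linarith)
qed

lemma Rm_anti: "Rm G p x y v = - Rm G p y x v"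
  unfolding Rm_def by simp

end

context acm_frame begin

theorem part2: "scal_perp G Phi Z n e p =
    (1/2) * (scal G Z n e p - scal_star G Phi Z n e p) + Ric G Z n e p (Z p) (Z p)"
proof -
  define RR where "RR a b = Rm G p (EE a) (EE b)" for a b
  have "scal_perp G Phi Z n e p = (\<Sum>a<NN. \<Sum>b<NN. (1/2) *
      (gg (RR a b (EE b)) (EE a) - gg (RR a b (Phi p *v EE b)) (Phi p *v EE a)
       + eta (RR a b (EE b)) * eta (EE a) + eta (EE b) * gg (RR a b (Z p)) (EE a)))"
    unfolding scal_perp_def perp_gg RR_def ..
  also have "\<dots> = (1/2) * (scal G Z n e p - scal_star G Phi Z n e p
      + (\<Sum>a<NN. \<Sum>b<NN. eta (RR a b (EE b)) * eta (EE a))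
      + (\<Sum>a<NN. \<Sum>b<NN. eta (EE b) * gg (RR a b (Z p)) (EE a)))"
    unfolding sum4_half scal_def scal_star_def RR_def ..
  also have "(\<Sum>a<NN. \<Sum>b<NN. eta (RR a b (EE b)) * eta (EE a)) = Ric G Z n e p (Z p) (Z p)"
    by (simp only: sum_eta2) (simp add: Ric_def RR_def EE_last eta_gp)
  also have "(\<Sum>a<NN. \<Sum>b<NN. eta (EE b) * gg (RR a b (Z p)) (EE a)) = Ric G Z n e p (Z p) (Z p)"
  proof -
    have "(\<Sum>a<NN. \<Sum>b<NN. eta (EE b) * gg (RR a b (Z p)) (EE a)) = (\<Sum>a<NN. gg (RR a (2*n) (Z p)) (EE a))"
      by (rule sum_eta3)
    also have "\<dots> = (\<Sum>a<NN. gg (Rm G p (Z p) (EE a) (EE a)) (Z p))"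
    proof (rule sum.cong[OF refl])
      fix a
      have "gg (Rm G p (EE a) (Z p) (Z p)) (EE a) = - gg (Rm G p (EE a) (Z p) (EE a)) (Z p)"
        using Rm_skew[of "EE a" "Z p" "Z p" "EE a"] by simp
      also have "\<dots> = gg (Rm G p (Z p) (EE a) (EE a)) (Z p)"
        using Rm_anti[of "EE a" "Z p" "EE a"] by simp
      finally show "gg (RR a (2*n) (Z p)) (EE a) = gg (Rm G p (Z p) (EE a) (EE a)) (Z p)"
        unfolding RR_def EE_last .
    qed
    also have "\<dots> = Ric G Z n e p (Z p) (Z p)" unfolding Ric_def ..
    finally show ?thesis .
  qed
  finally show ?thesis by (simp add: field_simps)
qed

end

theorem mainTheorem11:
  fixes n :: nat
    and U :: "(real^'m) set"
    and G Phi :: "real^'m \<Rightarrow> real^'m^'m"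
    and Z :: "real^'m \<Rightarrow> real^'m"
    and p :: "real^'m"
    and e :: "nat \<Rightarrow> real^'m"
  assumes "CARD('m) = 2*n+1"
    and "almost_contact_metric_on U G Phi Z"
    and "p \<in> U"
    and "adapted_frame G Z p n e"
  shows "scal_alt_perp G Phi Z n e p =
           (1/2) * (i8 G Phi Z n e p - i10 G Phi Z n e p + i12 G Phi Z n e p + i14 G Phi Z n e p)
           + 2 * (i7 G Phi Z n e p - i17 G Phi Z n e p)
       \<and> scal_perp G Phi Z n e p =
           (1/2) * (scal G Z n e p - scal_star G Phi Z n e p) + Ric G Z n e p (Z p) (Z p)"
proof -
  interpret F: acm_frame U G Phi Z p n e
    by (intro acm_frame.intro acm_pt.intro acm_frame_axioms.intro) (use assms in auto)
  show ?thesis using F.part1 F.part2 by simp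
qed

end
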